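(* Assume $d\in\{1,2\}$. Let $W_0=(0,\dot w_0)$ with $\dot w_0\in L^2(\mathbb{T}^d)$ nonzero and $\dot w_0\ge0$ a.e. on $\mathbb{T}^d$. Let $(w(t),\partial_tw(t))=e^{t\tilde A}W_0$ for $t\in\mathbb{R}$, where $\tilde A=\begin{pmatrix}0&1\\ \Delta&0\end{pmatrix}$. Then for every $t>r(W_0)$, $w(t,\cdot)>0$ a.e. on $\mathbb{T}^d$.
   Context: $\mathbb{T}^d=\mathbb{R}^d/2\pi\mathbb{Z}^d$, real-valued functions. $e^{t\tilde A}$ is the group on $H^1\times L^2(\mathbb{T}^d)$ solving the wave equation $\partial_t^2w=\Delta w$: for $(w_0,\dot w_0)\in H^1\times L^2$, $e^{t\tilde A}(w_0,\dot w_0)=(w(t),\partial_tw(t))$ with $w\in C^0(\mathbb{R},H^1)\cap C^1(\mathbb{R},L^2)$ (equivalently given by Fourier series: $c_n(w(t))=c_n(w_0)\cos(|n|t)+c_n(\dot w_0)\frac{\sin(|n|t)}{|n|}$, with $\frac{\sin(0\cdot t)}{0}:=t$). For $f\in L^2(\mathbb{T}^d,\mathbb{R}^n)$, $r(f)=\sup\{\tilde r\ge0: f=0\text{ a.e. on some ball of }\mathbb{T}^d\text{ of radius }\tilde r\}$; here $r(W_0)=r(\dot w_0)$. *)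

theory Defs
  imports "HOL-Analysis.Analysis"
begin

text \<open>Functions on the torus T^d = R^d / 2 pi Z^d are represented as 2pi-periodic
  functions on R^d = real^'n, where d = CARD('n).\<close>

definition int_vec :: "real^'n \<Rightarrow> bool" where
  "int_vec k \<longleftrightarrow> (\<forall>i. k $ i \<in> \<int>)"

definition periodic_2pi :: "(real^'n \<Rightarrow> real) \<Rightarrow> bool" where
  "periodic_2pi f \<longleftrightarrow> (\<forall>x k. int_vec k \<longrightarrow> f (x + (2*pi) *\<^sub>R k) = f x)"

definition torus_cube :: "(real^'n) set" where
  "torus_cube = cbox 0 (\<chi> i. 2*pi)"

definition L2_torus :: "(real^'n \<Rightarrow> real) \<Rightarrow> bool" where
  "L2_torus f \<longleftrightarrow> periodic_2pi f \<and> f \<in> borel_measurable lebesgue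
      \<and> set_integrable lebesgue torus_cube (\<lambda>x. (f x)\<^sup>2)"

definition fourier_coeff :: "(real^'n \<Rightarrow> real) \<Rightarrow> real^'n \<Rightarrow> complex" where
  "fourier_coeff f n =
     (LINT x : torus_cube | lebesgue. complex_of_real (f x) * cis (- (n \<bullet> x)))
       / (2 * pi) ^ CARD('n)"

definition sin_quot :: "real^'n \<Rightarrow> real \<Rightarrow> real" where
  "sin_quot n t = (if norm n = 0 then t else sin (norm n * t) / norm n)"

text \<open>g is (a representative of) the first component w(t) of e^{t A} (w0, w1).\<close>
definition wave_position :: "(real^'n \<Rightarrow> real) \<Rightarrow> (real^'n \<Rightarrow> real) \<Rightarrow> real
     \<Rightarrow> (real^'n \<Rightarrow> real) \<Rightarrow> bool" where
  "wave_position w0 w1 t g \<longleftrightarrow> L2_torus g \<and>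
     (\<forall>n. int_vec n \<longrightarrow>
        fourier_coeff g n = fourier_coeff w0 n * complex_of_real (cos (norm n * t))
                          + fourier_coeff w1 n * complex_of_real (sin_quot n t))"

definition torus_ball :: "real^'n \<Rightarrow> real \<Rightarrow> (real^'n) set" where
  "torus_ball c r = {x. \<exists>k. int_vec k \<and> dist x (c + (2*pi) *\<^sub>R k) < r}"

definition vanish_radius :: "(real^'n \<Rightarrow> real) \<Rightarrow> real" where
  "vanish_radius f = Sup {r. r \<ge> 0 \<and>
      (\<exists>c. AE x in lebesgue. x \<in> torus_ball c r \<longrightarrow> f x = 0)}"

end

theory Submission
  imports Defs
begin


definition sqr :: "real \<Rightarrow> real \<Rightarrow> real" where
  "sqr \<rho> t = (if \<rho> = 0 then t else sin (\<rho> * t) / \<rho>)"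

lemma cis_lin_deriv:
  assumes "\<rho> \<noteq> 0"
  shows "((\<lambda>s. cis (\<rho> * s) / (\<i> * complex_of_real \<rho>)) has_vector_derivative cis (\<rho> * x)) (at x within A)"
proof -
  have "((\<lambda>s. cis (\<rho> * s)) has_derivative (\<lambda>h. (\<rho> * h) *\<^sub>R (\<i> * cis (\<rho> * x)))) (at x within A)"
    by (intro has_derivative_cis derivative_intros)
  then have "((\<lambda>s. cis (\<rho> * s)) has_vector_derivative (\<rho> *\<^sub>R (\<i> * cis (\<rho> * x)))) (at x within A)"
    unfolding has_vector_derivative_def by (simp add: scaleR_scaleR mult.commute)
  then have "((\<lambda>s. cis (\<rho> * s) / (\<i> * complex_of_real \<rho>)) has_vector_derivative (\<rho> *\<^sub>R (\<i> * cis (\<rho> * x))) / (\<i> * complex_of_real \<rho>)) (at x within A)"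
    by (intro has_vector_derivative_divide) 
  then show ?thesis using assms by (simp add: scaleR_conv_of_real field_simps)
qed

lemma cis_1d:
  assumes t: "t > 0"
  shows "(\<integral>s. indicator {-t<..<t} s *\<^sub>R cis (\<rho> * s) \<partial>lborel) = 2 * complex_of_real (sqr \<rho> t)"
proof -
  have eq: "(\<integral>s. indicator {-t<..<t} s *\<^sub>R cis (\<rho> * s) \<partial>lborel) = interval_lebesgue_integral lborel (ereal (-t)) (ereal t) (\<lambda>s. cis (\<rho> * s))"
    using t by (simp add: interval_lebesgue_integral_def set_lebesgue_integral_def einterval_def greaterThanLessThan_def greaterThan_def lessThan_def Int_def)
  show ?thesis
  proof (cases "\<rho> = 0")
    case True
    have "interval_lebesgue_integral lborel (ereal (-t)) (ereal t) (\<lambda>s. cis (\<rho> * s)) = complex_of_real t - complex_of_real (-t)"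
      by (rule interval_integral_FTC_finite) (use True in \<open>auto intro!: continuous_intros derivative_eq_intros simp: has_vector_derivative_def scaleR_conv_of_real[abs_def]\<close>)
    then show ?thesis using True eq by (simp add: sqr_def)
  next
    case False
    have "interval_lebesgue_integral lborel (ereal (-t)) (ereal t) (\<lambda>s. cis (\<rho> * s)) = cis (\<rho> * t) / (\<i> * complex_of_real \<rho>) - cis (\<rho> * (-t)) / (\<i> * complex_of_real \<rho>)"
      by (rule interval_integral_FTC_finite) (use False in \<open>auto intro!: continuous_intros cis_lin_deriv\<close>)
    also have "\<dots> = (cis (\<rho> * t) - cis (\<rho> * (-t))) / (\<i> * complex_of_real \<rho>)"
      by (simp add: diff_divide_distrib)
    also have "cis (\<rho> * t) - cis (\<rho> * (-t)) = 2 * \<i> * complex_of_real (sin (\<rho> * t))"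
      by (simp add: complex_eq_iff)
    also have "(2 * \<i> * complex_of_real (sin (\<rho> * t))) / (\<i> * complex_of_real \<rho>) = 2 * complex_of_real (sin (\<rho> * t) / \<rho>)"
      using False by (simp add: field_simps)
    finally show ?thesis using False eq by (simp add: sqr_def)
  qed
qed


lemma arcsin_int:
  assumes a: "a > 0"
  shows "set_integrable lborel {-a<..<a} (\<lambda>v. 1 / sqrt (a\<^sup>2 - v\<^sup>2))"
    and "(LBINT v:{-a<..<a}. 1 / sqrt (a\<^sup>2 - v\<^sup>2)) = pi"
proof -
  have ei: "einterval (ereal (-a)) (ereal a) = {-a<..<a}"
    by (auto simp: einterval_def)
  have cont: "continuous_on {-a..a} (\<lambda>v. arcsin (v / a))"
    using a by (intro continuous_intros) (auto simp: divide_simps)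
  have der: "((\<lambda>v. arcsin (v / a)) has_real_derivative 1 / sqrt (a\<^sup>2 - v\<^sup>2)) (at v)"
    if "ereal (-a) < ereal v" "ereal v < ereal a" for v
  proof -
    have v: "-a < v" "v < a" using that by auto
    have v1: "-1 < v / a" "v / a < 1" using v a by (auto simp: divide_simps)
    have "((\<lambda>v. arcsin (v / a)) has_real_derivative inverse (sqrt (1 - (v/a)\<^sup>2)) * (1 / a)) (at v)"
      by (rule DERIV_chain2[OF DERIV_arcsin]) (use v1 a in \<open>auto intro!: derivative_eq_intros\<close>)
    moreover have "inverse (sqrt (1 - (v/a)\<^sup>2)) * (1 / a) = 1 / sqrt (a\<^sup>2 - v\<^sup>2)"
    proof -
      have "1 - (v/a)\<^sup>2 = (a\<^sup>2 - v\<^sup>2) / a\<^sup>2" using a by (simp add: field_simps power2_eq_square)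
      then have "sqrt (1 - (v/a)\<^sup>2) = sqrt (a\<^sup>2 - v\<^sup>2) / a" using a by (simp add: real_sqrt_divide)
      then show ?thesis using a by (simp add: field_simps)
    qed
    ultimately show ?thesis by simp
  qed
  have ic: "isCont (\<lambda>v. 1 / sqrt (a\<^sup>2 - v\<^sup>2)) v"
    if "ereal (-a) < ereal v" "ereal v < ereal a" for v
  proof -
    have "0 < (a - v) * (a + v)" using that by (intro mult_pos_pos) auto
    then have "v\<^sup>2 < a\<^sup>2" by (simp add: algebra_simps power2_eq_square)
    then show ?thesis by (intro continuous_intros) auto
  qed
  have nn: "AE v in lborel. ereal (-a) < ereal v \<longrightarrow> ereal v < ereal a \<longrightarrow> 0 \<le> 1 / sqrt (a\<^sup>2 - v\<^sup>2)"
  proof (intro AE_I2 impI)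
    fix v assume "ereal (-a) < ereal v" "ereal v < ereal a"
    then have "0 < (a - v) * (a + v)" by (intro mult_pos_pos) auto
    then have "v\<^sup>2 < a\<^sup>2" by (simp add: algebra_simps power2_eq_square)
    then show "0 \<le> 1 / sqrt (a\<^sup>2 - v\<^sup>2)" by simp
  qed
  have lA: "(((\<lambda>v. arcsin (v / a)) \<circ> real_of_ereal) \<longlongrightarrow> arcsin (-a / a)) (at_right (ereal (-a)))"
    unfolding ereal_tendsto_simps1 using continuous_on_Icc_at_rightD[OF cont] a by simp
  have lB: "(((\<lambda>v. arcsin (v / a)) \<circ> real_of_ereal) \<longlongrightarrow> arcsin (a / a)) (at_left (ereal a))"
    unfolding ereal_tendsto_simps1 using continuous_on_Icc_at_leftD[OF cont] a by simp
  have "set_integrable lborel (einterval (ereal (-a)) (ereal a)) (\<lambda>v. 1 / sqrt (a\<^sup>2 - v\<^sup>2))"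
    by (rule interval_integral_FTC_nonneg(1)[OF _ der ic nn lA lB]) (use a in auto)
  then show "set_integrable lborel {-a<..<a} (\<lambda>v. 1 / sqrt (a\<^sup>2 - v\<^sup>2))" using ei by simp
  have "(LBINT v=ereal (-a)..ereal a. 1 / sqrt (a\<^sup>2 - v\<^sup>2)) = arcsin (a / a) - arcsin (-a / a)"
    by (rule interval_integral_FTC_nonneg(2)[OF _ der ic nn lA lB]) (use a in auto)
  then show "(LBINT v:{-a<..<a}. 1 / sqrt (a\<^sup>2 - v\<^sup>2)) = pi"
    using a ei by (simp add: interval_lebesgue_integral_def)
qed


definition rot :: "real \<Rightarrow> real \<Rightarrow> real \<times> real \<Rightarrow> real \<times> real" where
  "rot \<alpha> \<beta> p = (\<alpha> * fst p - \<beta> * snd p, \<beta> * fst p + \<alpha> * snd p)"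

lemma rot_cont: "continuous_on UNIV (rot \<alpha> \<beta>)"
  unfolding rot_def by (intro continuous_intros)

lemma rot_measurable[measurable]: "rot \<alpha> \<beta> \<in> borel_measurable borel"
  by (rule borel_measurable_continuous_onI[OF rot_cont])

lemma rot_nn:
  assumes ab: "\<alpha>\<^sup>2 + \<beta>\<^sup>2 = 1" "\<alpha> \<noteq> 0" and f[measurable]: "f \<in> borel_measurable (borel :: (real \<times> real) measure)"
  shows "(\<integral>\<^sup>+p. f (rot \<alpha> \<beta> p) \<partial>lborel) = (\<integral>\<^sup>+p. f p \<partial>lborel)"
proof -
  have "(\<integral>\<^sup>+p. f p \<partial>lborel) = (\<integral>\<^sup>+p. f p \<partial>(lborel \<Otimes>\<^sub>M lborel))"
    by (simp add: lborel_prod)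
  also have "\<dots> = (\<integral>\<^sup>+b. \<integral>\<^sup>+a. f (a, b) \<partial>lborel \<partial>lborel)"
    by (rule lborel_pair.nn_integral_snd[symmetric]) (simp add: lborel_prod)
  also have "\<dots> = (\<integral>\<^sup>+b. ennreal \<bar>1/\<alpha>\<bar> * (\<integral>\<^sup>+s. f (- \<beta> * b / \<alpha> + (1/\<alpha>) * s, b) \<partial>lborel) \<partial>lborel)"
  proof (rule nn_integral_cong)
    fix b :: real
    show "(\<integral>\<^sup>+a. f (a, b) \<partial>lborel) = ennreal \<bar>1/\<alpha>\<bar> * (\<integral>\<^sup>+s. f (- \<beta> * b / \<alpha> + (1/\<alpha>) * s, b) \<partial>lborel)"
      by (rule nn_integral_real_affine) (use ab in auto)
  qed
  also have "\<dots> = ennreal \<bar>1/\<alpha>\<bar> * (\<integral>\<^sup>+b. \<integral>\<^sup>+s. f (- \<beta> * b / \<alpha> + (1/\<alpha>) * s, b) \<partial>lborel \<partial>lborel)"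
    by (rule nn_integral_cmult) measurable
  also have "(\<integral>\<^sup>+b. \<integral>\<^sup>+s. f (- \<beta> * b / \<alpha> + (1/\<alpha>) * s, b) \<partial>lborel \<partial>lborel)
      = (\<integral>\<^sup>+s. \<integral>\<^sup>+b. f (- \<beta> * b / \<alpha> + (1/\<alpha>) * s, b) \<partial>lborel \<partial>lborel)"
    by (rule lborel_pair.Fubini') measurable
  also have "\<dots> = (\<integral>\<^sup>+s. ennreal \<bar>\<alpha>\<bar> * (\<integral>\<^sup>+v. f (rot \<alpha> \<beta> (s, v)) \<partial>lborel) \<partial>lborel)"
  proof (rule nn_integral_cong)
    fix s :: real
    have "(\<integral>\<^sup>+b. f (- \<beta> * b / \<alpha> + (1/\<alpha>) * s, b) \<partial>lborel)
        = ennreal \<bar>\<alpha>\<bar> * (\<integral>\<^sup>+v. f (- \<beta> * (\<beta> * s + \<alpha> * v) / \<alpha> + (1/\<alpha>) * s, \<beta> * s + \<alpha> * v) \<partial>lborel)"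
      by (rule nn_integral_real_affine) (use ab in auto)
    also have "(\<lambda>v. f (- \<beta> * (\<beta> * s + \<alpha> * v) / \<alpha> + (1/\<alpha>) * s, \<beta> * s + \<alpha> * v)) = (\<lambda>v. f (rot \<alpha> \<beta> (s, v)))"
    proof
      fix v
      have "- \<beta> * (\<beta> * s + \<alpha> * v) / \<alpha> + (1/\<alpha>) * s = \<alpha> * s - \<beta> * v"
        using ab by (simp add: field_simps power2_eq_square) (metis add_diff_cancel_left' mult.assoc mult_1 ring_class.ring_distribs(2))
      then show "f (- \<beta> * (\<beta> * s + \<alpha> * v) / \<alpha> + (1/\<alpha>) * s, \<beta> * s + \<alpha> * v) = f (rot \<alpha> \<beta> (s, v))"
        by (simp add: rot_def)
    qed
    finally show "(\<integral>\<^sup>+b. f (- \<beta> * b / \<alpha> + (1/\<alpha>) * s, b) \<partial>lborel) = ennreal \<bar>\<alpha>\<bar> * (\<integral>\<^sup>+v. f (rot \<alpha> \<beta> (s, v)) \<partial>lborel)" .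
  qed
  also have "\<dots> = ennreal \<bar>\<alpha>\<bar> * (\<integral>\<^sup>+s. \<integral>\<^sup>+v. f (rot \<alpha> \<beta> (s, v)) \<partial>lborel \<partial>lborel)"
    by (rule nn_integral_cmult) measurable
  also have "(\<integral>\<^sup>+s. \<integral>\<^sup>+v. f (rot \<alpha> \<beta> (s, v)) \<partial>lborel \<partial>lborel) = (\<integral>\<^sup>+p. f (rot \<alpha> \<beta> p) \<partial>(lborel \<Otimes>\<^sub>M lborel))"
  proof -
    have m: "(\<lambda>p. f (rot \<alpha> \<beta> p)) \<in> borel_measurable (lborel \<Otimes>\<^sub>M lborel)"
      by (simp add: lborel_prod)
    show ?thesis using lborel.nn_integral_fst[OF m] by simp
  qed
  also have "\<dots> = (\<integral>\<^sup>+p. f (rot \<alpha> \<beta> p) \<partial>lborel)"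
    by (simp add: lborel_prod)
  finally have "(\<integral>\<^sup>+p. f p \<partial>lborel) = ennreal \<bar>1/\<alpha>\<bar> * (ennreal \<bar>\<alpha>\<bar> * (\<integral>\<^sup>+p. f (rot \<alpha> \<beta> p) \<partial>lborel))" .
  also have "\<dots> = (\<integral>\<^sup>+p. f (rot \<alpha> \<beta> p) \<partial>lborel)"
    using ab by (simp add: mult.assoc[symmetric] ennreal_mult[symmetric] abs_mult[symmetric])
  finally show ?thesis by simp
qed

lemma rot_distr:
  assumes ab: "\<alpha>\<^sup>2 + \<beta>\<^sup>2 = 1" "\<alpha> \<noteq> 0"
  shows "distr lborel borel (rot \<alpha> \<beta>) = (lborel :: (real \<times> real) measure)"
proof (rule measure_eqI)
  show "sets (distr lborel borel (rot \<alpha> \<beta>)) = sets (lborel :: (real \<times> real) measure)" by simp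
  fix A assume A: "A \<in> sets (distr lborel borel (rot \<alpha> \<beta>))"
  then have [measurable]: "A \<in> sets borel" by simp
  have pre: "rot \<alpha> \<beta> -` A \<in> sets borel"
    using measurable_sets[OF rot_measurable[of \<alpha> \<beta>], of A] by simp
  have "emeasure (distr lborel borel (rot \<alpha> \<beta>)) A = emeasure lborel (rot \<alpha> \<beta> -` A)"
    using pre by (subst emeasure_distr) auto
  also have "\<dots> = (\<integral>\<^sup>+p. indicator A (rot \<alpha> \<beta> p) \<partial>lborel)"
    proof -
    have "emeasure lborel (rot \<alpha> \<beta> -` A) = (\<integral>\<^sup>+p. indicator (rot \<alpha> \<beta> -` A) p \<partial>lborel)"
      using pre by (simp add: nn_integral_indicator)
    also have "\<dots> = (\<integral>\<^sup>+p. indicator A (rot \<alpha> \<beta> p) \<partial>lborel)"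
      by (intro nn_integral_cong) (simp split: split_indicator)
    finally show ?thesis .
  qed
  also have "\<dots> = (\<integral>\<^sup>+p. indicator A p \<partial>lborel)"
    by (rule rot_nn[OF ab]) measurable
  also have "\<dots> = emeasure lborel A" by simp
  finally show "emeasure (distr lborel borel (rot \<alpha> \<beta>)) A = emeasure lborel A" .
qed

lemma rot_integral:
  fixes f :: "real \<times> real \<Rightarrow> 'b::{banach, second_countable_topology}"
  assumes ab: "\<alpha>\<^sup>2 + \<beta>\<^sup>2 = 1" "\<alpha> \<noteq> 0" and [measurable]: "f \<in> borel_measurable borel"
  shows "(\<integral>p. f (rot \<alpha> \<beta> p) \<partial>lborel) = (\<integral>p. f p \<partial>lborel)"
proof -
  have "(\<integral>p. f p \<partial>lborel) = (\<integral>p. f p \<partial>distr lborel borel (rot \<alpha> \<beta>))"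
    using rot_distr[OF ab] by simp
  also have "\<dots> = (\<integral>p. f (rot \<alpha> \<beta> p) \<partial>lborel)"
    by (rule integral_distr) auto
  finally show ?thesis by simp
qed


definition k2 :: "real \<Rightarrow> real \<times> real \<Rightarrow> real" where
  "k2 t p = (if norm p < t then 1 / (2 * pi * sqrt (t\<^sup>2 - (norm p)\<^sup>2)) else 0)"

lemma k2_measurable[measurable]: "k2 t \<in> borel_measurable borel"
  unfolding k2_def by measurable

lemma k2_nonneg: "0 \<le> k2 t p"
proof -
  have "norm p < t \<Longrightarrow> (norm p)\<^sup>2 < t\<^sup>2"
    by (simp add: power_strict_mono)
  then show ?thesis by (auto simp: k2_def)
qed

lemma norm_pair_sq: "(norm (s::real, v::real))\<^sup>2 = s\<^sup>2 + v\<^sup>2"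
  by (simp add: norm_Pair)

lemma k2_slice:
  assumes t: "t > 0"
  shows "integrable lborel (\<lambda>v. k2 t (s, v))"
    and "(\<integral>v. k2 t (s, v) \<partial>lborel) = (if \<bar>s\<bar> < t then 1/2 else 0)"
proof -
  have "integrable lborel (\<lambda>v. k2 t (s, v)) \<and> (\<integral>v. k2 t (s, v) \<partial>lborel) = (if \<bar>s\<bar> < t then 1/2 else 0)"
  proof (cases "\<bar>s\<bar> < t")
    case True
    define a where "a = sqrt (t\<^sup>2 - s\<^sup>2)"
    have "\<bar>s\<bar>\<^sup>2 < t\<^sup>2" using True by (intro power_strict_mono) auto
    then have st: "s\<^sup>2 < t\<^sup>2" by simp
    then have a: "a > 0" "a\<^sup>2 = t\<^sup>2 - s\<^sup>2" by (auto simp: a_def)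
    have eq: "k2 t (s, v) = indicator {-a<..<a} v * (1 / (2 * pi) * (1 / sqrt (a\<^sup>2 - v\<^sup>2)))" for v
    proof -
      have n1: "norm (s, v) = sqrt (s\<^sup>2 + v\<^sup>2)" by (simp add: norm_Pair)
      have t1: "t = sqrt (t\<^sup>2)" using t by simp
      have "norm (s, v) < t \<longleftrightarrow> s\<^sup>2 + v\<^sup>2 < t\<^sup>2"
        by (subst n1, subst t1, rule real_sqrt_less_iff)
      also have "\<dots> \<longleftrightarrow> v\<^sup>2 < a\<^sup>2" using a by auto
      also have "\<dots> \<longleftrightarrow> sqrt (v\<^sup>2) < sqrt (a\<^sup>2)" by (rule real_sqrt_less_iff[symmetric])
      also have "\<dots> \<longleftrightarrow> v \<in> {-a<..<a}" using a(1) by (auto simp: abs_less_iff)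
      finally have iff: "norm (s, v) < t \<longleftrightarrow> v \<in> {-a<..<a}" .
      have "t\<^sup>2 - (norm (s, v))\<^sup>2 = a\<^sup>2 - v\<^sup>2" using a by (simp add: norm_pair_sq)
      then show ?thesis using iff by (simp add: k2_def indicator_def)
    qed
    have si: "set_integrable lborel {-a<..<a} (\<lambda>v. 1 / (2 * pi) * (1 / sqrt (a\<^sup>2 - v\<^sup>2)))"
      by (rule set_integrable_mult_right) (rule arcsin_int(1)[OF a(1)])
    have int: "integrable lborel (\<lambda>v. k2 t (s, v))"
      using si unfolding set_integrable_def eq by (simp add: mult.commute)
    have "(\<integral>v. k2 t (s, v) \<partial>lborel) = (LBINT v:{-a<..<a}. 1 / (2 * pi) * (1 / sqrt (a\<^sup>2 - v\<^sup>2)))"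
      unfolding eq set_lebesgue_integral_def by simp
    also have "\<dots> = 1 / (2 * pi) * (LBINT v:{-a<..<a}. (1 / sqrt (a\<^sup>2 - v\<^sup>2)))"
      by (rule set_integral_mult_right)
    also have "\<dots> = 1/2" using arcsin_int(2)[OF a(1)] by simp
    finally show ?thesis using True int by simp
  next
    case False
    have "k2 t (s, v) = 0" for v
    proof -
      have "\<bar>s\<bar> \<le> norm (s, v)" by (simp add: norm_Pair real_sqrt_ge_abs1)
      then show ?thesis using False by (simp add: k2_def)
    qed
    then show ?thesis using False by simp
  qed
  then show "integrable lborel (\<lambda>v. k2 t (s, v))" "(\<integral>v. k2 t (s, v) \<partial>lborel) = (if \<bar>s\<bar> < t then 1/2 else 0)"
    by auto
qed

lemma k2_sym: "k2 t (s, v) = k2 t (v, s)"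
  by (simp add: k2_def norm_Pair add.commute)

lemma k2_nn_slice:
  assumes t: "t > 0"
  shows "(\<integral>\<^sup>+v. ennreal (k2 t (s, v)) \<partial>lborel) = ennreal (indicator {-t<..<t} s / 2)"
proof -
  have "(\<integral>\<^sup>+v. ennreal (k2 t (s, v)) \<partial>lborel) = ennreal (\<integral>v. k2 t (s, v) \<partial>lborel)"
    by (rule nn_integral_eq_integral[OF k2_slice(1)[OF t]]) (simp add: k2_nonneg)
  then show ?thesis using k2_slice(2)[OF t, of s] by (auto simp: indicator_def abs_less_iff)
qed

lemma k2_nn:
  assumes t: "t > 0"
  shows "(\<integral>\<^sup>+p. ennreal (k2 t p) \<partial>lborel) = ennreal t"
proof -
  have "(\<integral>\<^sup>+p. ennreal (k2 t p) \<partial>lborel) = (\<integral>\<^sup>+p. ennreal (k2 t p) \<partial>(lborel \<Otimes>\<^sub>M lborel))"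
    by (simp add: lborel_prod)
  also have "\<dots> = (\<integral>\<^sup>+s. \<integral>\<^sup>+v. ennreal (k2 t (s, v)) \<partial>lborel \<partial>lborel)"
    by (rule lborel.nn_integral_fst[symmetric]) (simp add: lborel_prod)
  also have "\<dots> = (\<integral>\<^sup>+s. ennreal (1/2) * indicator {-t<..<t} s \<partial>lborel)"
    using k2_nn_slice[OF t] by (intro nn_integral_cong) (simp add: indicator_def)
  also have "\<dots> = ennreal (1/2) * emeasure lborel {-t<..<t}"
    by (subst nn_integral_cmult_indicator) auto
  also have "\<dots> = ennreal (1/2) * ennreal (2 * t)" using t by simp
  also have "\<dots> = ennreal (1/2 * (2 * t))" using t by (intro ennreal_mult[symmetric]) auto
  also have "\<dots> = ennreal t" by simp
  finally show ?thesis .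
qed

lemma k2_integrable:
  assumes t: "t > 0"
  shows "integrable lborel (k2 t)"
  by (rule integrableI_nonneg) (auto simp: k2_nonneg k2_nn[OF t])


lemma fst_borel[measurable]: "(fst :: real \<times> real \<Rightarrow> real) \<in> borel_measurable borel"
  by (rule borel_measurable_continuous_onI) (intro continuous_intros)

lemma snd_borel[measurable]: "(snd :: real \<times> real \<Rightarrow> real) \<in> borel_measurable borel"
  by (rule borel_measurable_continuous_onI) (intro continuous_intros)

lemma cis_borel: "cis \<in> borel_measurable borel"
  by (rule borel_measurable_continuous_onI) (intro continuous_intros)

lemma cis_measurable[measurable]: "f \<in> borel_measurable M \<Longrightarrow> (\<lambda>x. cis (f x)) \<in> borel_measurable M"
  using measurable_compose[OF _ cis_borel] by blast

lemma k2_cis_integrable: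
  assumes t: "t > 0" and [measurable]: "g \<in> borel_measurable (borel :: (real \<times> real) measure)"
  shows "integrable lborel (\<lambda>p. k2 t p *\<^sub>R cis (g p))"
  by (rule Bochner_Integration.integrable_bound[OF k2_integrable[OF t]]) (auto simp: k2_nonneg)

lemma k2_axis1:
  assumes t: "t > 0"
  shows "(\<integral>p. k2 t p *\<^sub>R cis (\<rho> * fst p) \<partial>lborel) = complex_of_real (sqr \<rho> t)"
proof -
  have int: "integrable (lborel \<Otimes>\<^sub>M lborel) (\<lambda>p. k2 t p *\<^sub>R cis (\<rho> * fst p))"
    using k2_cis_integrable[OF t, of "\<lambda>p. \<rho> * fst p"] by (simp add: lborel_prod)
  have "(\<integral>p. k2 t p *\<^sub>R cis (\<rho> * fst p) \<partial>lborel) = (\<integral>p. k2 t p *\<^sub>R cis (\<rho> * fst p) \<partial>(lborel \<Otimes>\<^sub>M lborel))"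
    by (simp add: lborel_prod)
  also have "\<dots> = (\<integral>x. \<integral>y. k2 t (x, y) *\<^sub>R cis (\<rho> * x) \<partial>lborel \<partial>lborel)"
    using lborel_pair.integral_fst'[OF int] by simp
  also have "\<dots> = (\<integral>x. (1/2::real) *\<^sub>R (indicator {-t<..<t} x *\<^sub>R cis (\<rho> * x)) \<partial>lborel)"
  proof (rule Bochner_Integration.integral_cong[OF refl])
    fix x :: real
    have "(\<integral>y. k2 t (x, y) *\<^sub>R cis (\<rho> * x) \<partial>lborel) = (\<integral>y. k2 t (x, y) \<partial>lborel) *\<^sub>R cis (\<rho> * x)"
      by (rule integral_scaleR_left) (rule k2_slice(1)[OF t])
    also have "\<dots> = (1/2::real) *\<^sub>R (indicator {-t<..<t} x *\<^sub>R cis (\<rho> * x))"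
      using k2_slice(2)[OF t, of x] by (auto simp: indicator_def abs_less_iff)
    finally show "(\<integral>y. k2 t (x, y) *\<^sub>R cis (\<rho> * x) \<partial>lborel) = (1/2::real) *\<^sub>R (indicator {-t<..<t} x *\<^sub>R cis (\<rho> * x))" .
  qed
  also have "\<dots> = (1/2::real) *\<^sub>R (\<integral>x. indicator {-t<..<t} x *\<^sub>R cis (\<rho> * x) \<partial>lborel)"
    by (rule integral_scaleR_right)
  also have "\<dots> = complex_of_real (sqr \<rho> t)"
    using cis_1d[OF t, of \<rho>] by (simp add: scaleR_conv_of_real)
  finally show ?thesis .
qed

lemma k2_axis2:
  assumes t: "t > 0"
  shows "(\<integral>p. k2 t p *\<^sub>R cis (\<rho> * snd p) \<partial>lborel) = complex_of_real (sqr \<rho> t)"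
proof -
  have int: "integrable (lborel \<Otimes>\<^sub>M lborel) (\<lambda>(x, y). k2 t (x, y) *\<^sub>R cis (\<rho> * y))"
    using k2_cis_integrable[OF t, of "\<lambda>p. \<rho> * snd p"] by (simp add: lborel_prod case_prod_beta')
  have "(\<integral>p. k2 t p *\<^sub>R cis (\<rho> * snd p) \<partial>lborel) = (\<integral>p. (\<lambda>(x, y). k2 t (x, y) *\<^sub>R cis (\<rho> * y)) p \<partial>(lborel \<Otimes>\<^sub>M lborel))"
    by (simp add: lborel_prod case_prod_beta')
  also have "\<dots> = (\<integral>y. \<integral>x. k2 t (x, y) *\<^sub>R cis (\<rho> * y) \<partial>lborel \<partial>lborel)"
    using lborel_pair.integral_snd[OF int] by simp
  also have "\<dots> = (\<integral>y. (1/2::real) *\<^sub>R (indicator {-t<..<t} y *\<^sub>R cis (\<rho> * y)) \<partial>lborel)"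
  proof (rule Bochner_Integration.integral_cong[OF refl])
    fix y :: real
    have e: "(\<lambda>x. k2 t (x, y)) = (\<lambda>x. k2 t (y, x))" by (rule ext) (rule k2_sym)
    have "(\<integral>x. k2 t (x, y) *\<^sub>R cis (\<rho> * y) \<partial>lborel) = (\<integral>x. k2 t (x, y) \<partial>lborel) *\<^sub>R cis (\<rho> * y)"
      by (rule integral_scaleR_left) (simp add: e k2_slice(1)[OF t])
    also have "\<dots> = (\<integral>x. k2 t (y, x) \<partial>lborel) *\<^sub>R cis (\<rho> * y)" by (simp add: e)
    also have "\<dots> = (1/2::real) *\<^sub>R (indicator {-t<..<t} y *\<^sub>R cis (\<rho> * y))"
      using k2_slice(2)[OF t, of y] by (auto simp: indicator_def abs_less_iff)
    finally show "(\<integral>x. k2 t (x, y) *\<^sub>R cis (\<rho> * y) \<partial>lborel) = (1/2::real) *\<^sub>R (indicator {-t<..<t} y *\<^sub>R cis (\<rho> * y))" .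
  qed
  also have "\<dots> = (1/2::real) *\<^sub>R (\<integral>x. indicator {-t<..<t} x *\<^sub>R cis (\<rho> * x) \<partial>lborel)"
    by (rule integral_scaleR_right)
  also have "\<dots> = complex_of_real (sqr \<rho> t)"
    using cis_1d[OF t, of \<rho>] by (simp add: scaleR_conv_of_real)
  finally show ?thesis .
qed

lemma norm_rot: "\<alpha>\<^sup>2 + \<beta>\<^sup>2 = 1 \<Longrightarrow> norm (rot \<alpha> \<beta> p) = norm p"
proof -
  assume ab: "\<alpha>\<^sup>2 + \<beta>\<^sup>2 = 1"
  have "(\<alpha> * fst p - \<beta> * snd p)\<^sup>2 + (\<beta> * fst p + \<alpha> * snd p)\<^sup>2 = (\<alpha>\<^sup>2 + \<beta>\<^sup>2) * ((fst p)\<^sup>2 + (snd p)\<^sup>2)"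
    by (simp add: algebra_simps power2_eq_square)
  then show ?thesis using ab by (simp add: rot_def norm_Pair norm_prod_def)
qed

lemma k2_rot: "\<alpha>\<^sup>2 + \<beta>\<^sup>2 = 1 \<Longrightarrow> k2 t (rot \<alpha> \<beta> p) = k2 t p"
  by (simp add: k2_def norm_rot)

lemma k2_FT:
  assumes t: "t > 0"
  shows "(\<integral>p. k2 t p *\<^sub>R cis (\<xi>1 * fst p + \<xi>2 * snd p) \<partial>lborel) = complex_of_real (sqr (sqrt (\<xi>1\<^sup>2 + \<xi>2\<^sup>2)) t)"
proof -
  define \<rho> where "\<rho> = sqrt (\<xi>1\<^sup>2 + \<xi>2\<^sup>2)"
  have f[measurable]: "(\<lambda>p. k2 t p *\<^sub>R cis (\<xi>1 * fst p + \<xi>2 * snd p)) \<in> borel_measurable borel"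
    by measurable
  consider "\<xi>1 = 0" "\<xi>2 = 0" | "\<xi>1 \<noteq> 0" | "\<xi>1 = 0" "\<xi>2 \<noteq> 0" by blast
  then show ?thesis
  proof cases
    case 1
    then show ?thesis using k2_axis1[OF t, of 0] by simp
  next
    case 2
    then have \<rho>: "\<rho> > 0" "\<rho>\<^sup>2 = \<xi>1\<^sup>2 + \<xi>2\<^sup>2" unfolding \<rho>_def by (auto simp: add_pos_nonneg)
    define \<alpha> where "\<alpha> = \<xi>1 / \<rho>"
    define \<beta> where "\<beta> = \<xi>2 / \<rho>"
    have "\<alpha>\<^sup>2 + \<beta>\<^sup>2 = (\<xi>1\<^sup>2 + \<xi>2\<^sup>2) / \<rho>\<^sup>2" by (simp add: \<alpha>_def \<beta>_def power_divide add_divide_distrib)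
    then have ab: "\<alpha>\<^sup>2 + \<beta>\<^sup>2 = 1" "\<alpha> \<noteq> 0" using \<rho> 2 by (auto simp: \<alpha>_def)
    have "(\<integral>p. k2 t p *\<^sub>R cis (\<xi>1 * fst p + \<xi>2 * snd p) \<partial>lborel)
        = (\<integral>p. k2 t (rot \<alpha> \<beta> p) *\<^sub>R cis (\<xi>1 * fst (rot \<alpha> \<beta> p) + \<xi>2 * snd (rot \<alpha> \<beta> p)) \<partial>lborel)"
      using rot_integral[OF ab f] by simp
    also have "\<dots> = (\<integral>p. k2 t p *\<^sub>R cis (\<rho> * fst p) \<partial>lborel)"
    proof (rule Bochner_Integration.integral_cong[OF refl])
      fix p :: "real \<times> real"
      have "\<xi>1 * fst (rot \<alpha> \<beta> p) + \<xi>2 * snd (rot \<alpha> \<beta> p) = (\<xi>1 * \<alpha> + \<xi>2 * \<beta>) * fst p + (\<xi>2 * \<alpha> - \<xi>1 * \<beta>) * snd p"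
        by (simp add: rot_def algebra_simps)
      also have "\<xi>1 * \<alpha> + \<xi>2 * \<beta> = \<rho>" using \<rho> by (simp add: \<alpha>_def \<beta>_def field_simps power2_eq_square)
      also have "\<xi>2 * \<alpha> - \<xi>1 * \<beta> = 0" by (simp add: \<alpha>_def \<beta>_def field_simps)
      finally show "k2 t (rot \<alpha> \<beta> p) *\<^sub>R cis (\<xi>1 * fst (rot \<alpha> \<beta> p) + \<xi>2 * snd (rot \<alpha> \<beta> p)) = k2 t p *\<^sub>R cis (\<rho> * fst p)"
        using k2_rot[OF ab(1)] by simp
    qed
    also have "\<dots> = complex_of_real (sqr \<rho> t)" by (rule k2_axis1[OF t])
    finally show ?thesis by (simp add: \<rho>_def)
  next
    case 3
    then have \<rho>: "\<rho> > 0" "\<rho>\<^sup>2 = \<xi>1\<^sup>2 + \<xi>2\<^sup>2" unfolding \<rho>_def by (auto simp: add_nonneg_pos)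
    define \<alpha> where "\<alpha> = \<xi>2 / \<rho>"
    define \<beta> where "\<beta> = - \<xi>1 / \<rho>"
    have "\<alpha>\<^sup>2 + \<beta>\<^sup>2 = (\<xi>1\<^sup>2 + \<xi>2\<^sup>2) / \<rho>\<^sup>2" by (simp add: \<alpha>_def \<beta>_def power_divide add_divide_distrib add.commute)
    then have ab: "\<alpha>\<^sup>2 + \<beta>\<^sup>2 = 1" "\<alpha> \<noteq> 0" using \<rho> 3 by (auto simp: \<alpha>_def)
    have "(\<integral>p. k2 t p *\<^sub>R cis (\<xi>1 * fst p + \<xi>2 * snd p) \<partial>lborel)
        = (\<integral>p. k2 t (rot \<alpha> \<beta> p) *\<^sub>R cis (\<xi>1 * fst (rot \<alpha> \<beta> p) + \<xi>2 * snd (rot \<alpha> \<beta> p)) \<partial>lborel)"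
      using rot_integral[OF ab f] by simp
    also have "\<dots> = (\<integral>p. k2 t p *\<^sub>R cis (\<rho> * snd p) \<partial>lborel)"
    proof (rule Bochner_Integration.integral_cong[OF refl])
      fix p :: "real \<times> real"
      have "\<xi>1 * fst (rot \<alpha> \<beta> p) + \<xi>2 * snd (rot \<alpha> \<beta> p) = (\<xi>1 * \<alpha> + \<xi>2 * \<beta>) * fst p + (\<xi>2 * \<alpha> - \<xi>1 * \<beta>) * snd p"
        by (simp add: rot_def algebra_simps)
      also have "\<xi>2 * \<alpha> - \<xi>1 * \<beta> = \<rho>" using \<rho> by (simp add: \<alpha>_def \<beta>_def field_simps power2_eq_square)
      also have "\<xi>1 * \<alpha> + \<xi>2 * \<beta> = 0" by (simp add: \<alpha>_def \<beta>_def field_simps)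
      finally show "k2 t (rot \<alpha> \<beta> p) *\<^sub>R cis (\<xi>1 * fst (rot \<alpha> \<beta> p) + \<xi>2 * snd (rot \<alpha> \<beta> p)) = k2 t p *\<^sub>R cis (\<rho> * snd p)"
        using k2_rot[OF ab(1)] by simp
    qed
    also have "\<dots> = complex_of_real (sqr \<rho> t)" by (rule k2_axis2[OF t])
    finally show ?thesis by (simp add: \<rho>_def)
  qed
qed


definition emb2 :: "'n \<Rightarrow> real \<times> real \<Rightarrow> real^'n" where
  "emb2 i p = (\<chi> k. if k = i then fst p else snd p)"

lemma emb2_cont: "continuous_on UNIV (emb2 i)"
  unfolding emb2_def
proof (intro continuous_on_vec_lambda)
  fix k show "continuous_on UNIV (\<lambda>x. if k = i then fst x else snd x)"
    by (cases "k = i") (simp_all add: continuous_on_fst[OF continuous_on_id] continuous_on_snd[OF continuous_on_id])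
qed

lemma emb2_meas[measurable]: "(emb2 i :: real \<times> real \<Rightarrow> real^'n) \<in> borel_measurable borel"
  by (rule borel_measurable_continuous_onI[OF emb2_cont])

lemma Basis_vec_range: "(Basis :: (real^'n::finite) set) = range (\<lambda>k. axis k 1)"
  by (auto simp: Basis_vec_def)

lemma lborel_emb2:
  fixes i j :: "'n::finite"
  assumes ij: "i \<noteq> j" "UNIV = {i, j}"
  shows "(lborel :: (real^'n) measure) = distr lborel borel (emb2 i)"
proof (rule lborel_eqI)
  fix l u :: "real^'n"
  assume le: "\<And>b. b \<in> Basis \<Longrightarrow> l \<bullet> b \<le> u \<bullet> b"
  have lei: "l $ k \<le> u $ k" for k
    using le[of "axis k 1"] by (auto simp: Basis_vec_range inner_axis)
  have pre: "emb2 i -` box l u = {l$i<..<u$i} \<times> {l$j<..<u$j}"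
  proof -
    have mb: "p \<in> box l u \<longleftrightarrow> (l$i < p$i \<and> p$i < u$i) \<and> (l$j < p$j \<and> p$j < u$j)" for p :: "real^'n"
    proof -
      have k: "k = i \<or> k = j" for k
      proof -
        have "k \<in> {i, j}" by (subst ij(2)[symmetric]) (rule UNIV_I)
        then show ?thesis by simp
      qed
      have "(\<forall>k. l$k < p$k \<and> p$k < u$k) \<longleftrightarrow> (l$i < p$i \<and> p$i < u$i) \<and> (l$j < p$j \<and> p$j < u$j)"
      proof (rule iffI)
        assume "(l$i < p$i \<and> p$i < u$i) \<and> (l$j < p$j \<and> p$j < u$j)"
        then show "\<forall>k. l$k < p$k \<and> p$k < u$k"
        proof (intro allI)
          fix k
          assume h: "(l$i < p$i \<and> p$i < u$i) \<and> (l$j < p$j \<and> p$j < u$j)"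
          from k[of k] show "l$k < p$k \<and> p$k < u$k"
          proof
            assume "k = i" then show ?thesis using h by simp
          next
            assume "k = j" then show ?thesis using h by simp
          qed
        qed
      qed blast
      then show ?thesis unfolding mem_box_cart .
    qed
    have e: "emb2 i x $ i = fst x" "emb2 i x $ j = snd x" for x using ij(1) by (auto simp: emb2_def)
    show ?thesis by (rule set_eqI) (simp only: vimage_eq mb e greaterThanLessThan_iff mem_Times_iff)
  qed
  have "emeasure (distr lborel borel (emb2 i)) (box l u) = emeasure lborel (emb2 i -` box l u)"
    by (subst emeasure_distr) auto
  also have "\<dots> = emeasure (lborel \<Otimes>\<^sub>M lborel) ({l$i<..<u$i} \<times> {l$j<..<u$j})"
    by (simp add: pre lborel_prod)
  also have "\<dots> = emeasure lborel {l$i<..<u$i} * emeasure lborel {l$j<..<u$j}"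
    by (rule lborel.emeasure_pair_measure_Times) auto
  also have "\<dots> = ennreal ((u$i - l$i) * (u$j - l$j))"
    using lei[of i] lei[of j] by (simp add: ennreal_mult)
  also have "(u$i - l$i) * (u$j - l$j) = (\<Prod>b\<in>Basis. (u - l) \<bullet> b)"
  proof -
    have B: "(Basis :: (real^'n) set) = (\<lambda>k. axis k 1) ` {i, j}"
      unfolding Basis_vec_range by (subst ij(2)[symmetric]) (rule refl)
    have "axis i (1::real) \<noteq> axis j 1" using ij by (simp add: axis_eq_axis)
    then show ?thesis unfolding B by (simp add: inner_axis)
  qed
  finally show "emeasure (distr lborel borel (emb2 i)) (box l u) = ennreal (\<Prod>b\<in>Basis. (u - l) \<bullet> b)" .
qed simp

definition emb1 :: "real \<Rightarrow> real^'n" where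
  "emb1 a = (\<chi> k. a)"

lemma emb1_cont: "continuous_on UNIV emb1"
  unfolding emb1_def by (intro continuous_on_vec_lambda continuous_intros)

lemma emb1_meas[measurable]: "emb1 \<in> borel_measurable borel"
  by (rule borel_measurable_continuous_onI[OF emb1_cont])

lemma lborel_emb1:
  fixes i :: "'n::finite"
  assumes ij: "UNIV = {i}"
  shows "(lborel :: (real^'n) measure) = distr lborel borel emb1"
proof (rule lborel_eqI)
  fix l u :: "real^'n"
  assume le: "\<And>b. b \<in> Basis \<Longrightarrow> l \<bullet> b \<le> u \<bullet> b"
  have lei: "l $ k \<le> u $ k" for k
    using le[of "axis k 1"] by (auto simp: Basis_vec_range inner_axis)
  have pre: "emb1 -` box l u = {l$i<..<u$i}"
  proof -
    have mb: "p \<in> box l u \<longleftrightarrow> (l$i < p$i \<and> p$i < u$i)" for p :: "real^'n"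
    proof -
      have k: "k = i" for k
      proof -
        have "k \<in> {i}" by (subst ij[symmetric]) (rule UNIV_I)
        then show ?thesis by simp
      qed
      have "(\<forall>k. l$k < p$k \<and> p$k < u$k) \<longleftrightarrow> (l$i < p$i \<and> p$i < u$i)"
      proof (rule iffI)
        assume h: "l$i < p$i \<and> p$i < u$i"
        show "\<forall>k. l$k < p$k \<and> p$k < u$k"
        proof
          fix k have "k = i" by (rule k) then show "l$k < p$k \<and> p$k < u$k" using h by simp
        qed
      qed blast
      then show ?thesis unfolding mem_box_cart .
    qed
    have e: "emb1 x $ i = x" for x by (simp add: emb1_def)
    show ?thesis by (rule set_eqI) (simp only: vimage_eq mb e greaterThanLessThan_iff)
  qed
  have "emeasure (distr lborel borel emb1) (box l u) = emeasure lborel (emb1 -` box l u)"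
    by (subst emeasure_distr) auto
  also have "\<dots> = ennreal (u$i - l$i)"
    using lei[of i] by (simp add: pre)
  also have "(u$i - l$i) = (\<Prod>b\<in>Basis. (u - l) \<bullet> b)"
  proof -
    have B: "(Basis :: (real^'n) set) = (\<lambda>k. axis k 1) ` {i}"
      unfolding Basis_vec_range by (subst ij[symmetric]) (rule refl)
    show ?thesis unfolding B by (simp add: inner_axis)
  qed
  finally show "emeasure (distr lborel borel emb1) (box l u) = ennreal (\<Prod>b\<in>Basis. (u - l) \<bullet> b)" .
qed simp


definition kern :: "real \<Rightarrow> real^'n \<Rightarrow> real" where
  "kern t y = (if CARD('n) = 1 then (if norm y < t then 1/2 else 0)
     else (if norm y < t then 1 / (2 * pi * sqrt (t\<^sup>2 - (norm y)\<^sup>2)) else 0))"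

lemma kern_measurable[measurable]: "kern t \<in> borel_measurable borel"
  unfolding kern_def by measurable

lemma sin_quot_sqr: "sin_quot \<xi> t = sqr (norm \<xi>) t"
  by (simp add: sin_quot_def sqr_def)

lemma sqr_abs: "sqr \<bar>\<rho>\<bar> t = sqr \<rho> t"
  by (cases "\<rho> \<ge> 0") (auto simp: sqr_def)

lemma kern_FT2:
  fixes i j :: "'n::finite" and \<xi> :: "real^'n"
  assumes ij: "i \<noteq> j" "UNIV = {i, j}" and t: "t > 0"
  shows "integrable lborel (kern t :: real^'n \<Rightarrow> real)"
    and "(\<integral>y. kern t y *\<^sub>R cis (\<xi> \<bullet> y) \<partial>lborel) = complex_of_real (sin_quot \<xi> t)"
proof -
  have "card (UNIV :: 'n set) = card {i, j}" using ij(2) by (rule arg_cong)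
  then have card: "CARD('n) = 2" using ij(1) by simp
  have su: "sum f UNIV = f i + f j" for f :: "'n \<Rightarrow> real"
  proof -
    have "sum f UNIV = sum f {i, j}" using ij(2) by (rule arg_cong)
    then show ?thesis using ij(1) by simp
  qed
  have nrm: "norm (emb2 i p :: real^'n) = norm p" for p
  proof -
    have "norm (emb2 i p :: real^'n) = sqrt ((fst p)\<^sup>2 + (snd p)\<^sup>2)"
      unfolding norm_vec_def L2_set_def su using ij(1) by (simp add: emb2_def)
    then show ?thesis by (simp add: norm_Pair norm_prod_def)
  qed
  have kk: "kern t (emb2 i p :: real^'n) = k2 t p" for p
    using card by (simp add: kern_def k2_def nrm)
  have inn: "\<xi> \<bullet> (emb2 i p :: real^'n) = \<xi>$i * fst p + \<xi>$j * snd p" for p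
    unfolding inner_vec_def su using ij(1) by (simp add: emb2_def)
  have nx: "norm \<xi> = sqrt ((\<xi>$i)\<^sup>2 + (\<xi>$j)\<^sup>2)"
    unfolding norm_vec_def L2_set_def su by simp
  have L: "(lborel :: (real^'n) measure) = distr lborel borel (emb2 i)" by (rule lborel_emb2[OF ij])
  have "integrable (distr lborel borel (emb2 i)) (kern t :: real^'n \<Rightarrow> real)"
    by (subst integrable_distr_eq) (auto simp: kk k2_integrable[OF t])
  then show "integrable lborel (kern t :: real^'n \<Rightarrow> real)" using L by simp
  have "(\<integral>y. kern t y *\<^sub>R cis (\<xi> \<bullet> y) \<partial>lborel) = (\<integral>y. kern t y *\<^sub>R cis (\<xi> \<bullet> y) \<partial>distr lborel borel (emb2 i))"
    using L by simp
  also have "\<dots> = (\<integral>p. kern t (emb2 i p :: real^'n) *\<^sub>R cis (\<xi> \<bullet> (emb2 i p)) \<partial>lborel)"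
    by (rule integral_distr) auto
  also have "\<dots> = (\<integral>p. k2 t p *\<^sub>R cis (\<xi>$i * fst p + \<xi>$j * snd p) \<partial>lborel)"
    by (simp add: kk inn)
  also have "\<dots> = complex_of_real (sqr (sqrt ((\<xi>$i)\<^sup>2 + (\<xi>$j)\<^sup>2)) t)"
    by (rule k2_FT[OF t])
  finally show "(\<integral>y. kern t y *\<^sub>R cis (\<xi> \<bullet> y) \<partial>lborel) = complex_of_real (sin_quot \<xi> t)"
    by (simp add: sin_quot_sqr nx)
qed

lemma kern_FT1:
  fixes i :: "'n::finite" and \<xi> :: "real^'n"
  assumes ij: "UNIV = {i}" and t: "t > 0"
  shows "integrable lborel (kern t :: real^'n \<Rightarrow> real)"
    and "(\<integral>y. kern t y *\<^sub>R cis (\<xi> \<bullet> y) \<partial>lborel) = complex_of_real (sin_quot \<xi> t)"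
proof -
  have "card (UNIV :: 'n set) = card {i}" using ij by (rule arg_cong)
  then have card: "CARD('n) = 1" by simp
  have su: "sum f UNIV = f i" for f :: "'n \<Rightarrow> real"
  proof -
    have "sum f UNIV = sum f {i}" using ij by (rule arg_cong)
    then show ?thesis by simp
  qed
  have nrm: "norm (emb1 a :: real^'n) = \<bar>a\<bar>" for a
    unfolding norm_vec_def L2_set_def su by (simp add: emb1_def)
  have kk: "kern t (emb1 a :: real^'n) = indicator {-t<..<t} a / 2" for a
    using card by (auto simp: kern_def nrm indicator_def abs_less_iff)
  have inn: "\<xi> \<bullet> (emb1 a :: real^'n) = \<xi>$i * a" for a
    unfolding inner_vec_def su by (simp add: emb1_def)
  have nx: "norm \<xi> = \<bar>\<xi>$i\<bar>"
    unfolding norm_vec_def L2_set_def su by simp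
  have L: "(lborel :: (real^'n) measure) = distr lborel borel emb1" by (rule lborel_emb1[OF ij])
  have "integrable lborel (\<lambda>a::real. (indicator {-t<..<t} a :: real) / 2)"
    by (intro integrable_divide integrable_real_indicator) (use t in \<open>auto simp: emeasure_lborel_Ioo\<close>)
  then have "integrable (distr lborel borel emb1) (kern t :: real^'n \<Rightarrow> real)"
    by (subst integrable_distr_eq) (auto simp: kk)
  then show "integrable lborel (kern t :: real^'n \<Rightarrow> real)" using L by simp
  have "(\<integral>y. kern t y *\<^sub>R cis (\<xi> \<bullet> y) \<partial>lborel) = (\<integral>y. kern t y *\<^sub>R cis (\<xi> \<bullet> y) \<partial>distr lborel borel emb1)"
    using L by simp
  also have "\<dots> = (\<integral>a. kern t (emb1 a :: real^'n) *\<^sub>R cis (\<xi> \<bullet> (emb1 a)) \<partial>lborel)"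
    by (rule integral_distr) auto
  also have "\<dots> = (\<integral>a. (1/2::real) *\<^sub>R (indicator {-t<..<t} a *\<^sub>R cis (\<xi>$i * a)) \<partial>lborel)"
    by (simp add: kk inn)
  also have "\<dots> = (1/2::real) *\<^sub>R (\<integral>a. indicator {-t<..<t} a *\<^sub>R cis (\<xi>$i * a) \<partial>lborel)"
    by (rule integral_scaleR_right)
  also have "\<dots> = complex_of_real (sqr (\<xi>$i) t)"
    using cis_1d[OF t, of "\<xi>$i"] by (simp add: scaleR_conv_of_real)
  finally show "(\<integral>y. kern t y *\<^sub>R cis (\<xi> \<bullet> y) \<partial>lborel) = complex_of_real (sin_quot \<xi> t)"
    by (simp add: sin_quot_sqr nx sqr_abs)
qed


lemma borel_leb: "f \<in> borel_measurable borel \<Longrightarrow> f \<in> borel_measurable lebesgue"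
  by (rule measurable_completion) simp

lemma cube_leb[measurable]: "torus_cube \<in> sets lebesgue"
  unfolding torus_cube_def by (rule sets_completionI_sets) simp

lemma int_vec_add: "int_vec a \<Longrightarrow> int_vec b \<Longrightarrow> int_vec (a + b)"
  by (auto simp: int_vec_def)

lemma int_vec_uminus: "int_vec a \<Longrightarrow> int_vec (- a)"
  by (auto simp: int_vec_def)

lemma int_vec_0: "int_vec 0"
  by (auto simp: int_vec_def)

lemma int_vec_axis: "int_vec (axis i 1)"
  by (auto simp: int_vec_def axis_def)

inductive_set TP :: "(real^'n \<Rightarrow> complex) set" where
  gen: "int_vec k \<Longrightarrow> (\<lambda>x. c * cis (k \<bullet> x)) \<in> TP"
| add: "f \<in> TP \<Longrightarrow> g \<in> TP \<Longrightarrow> (\<lambda>x. f x + g x) \<in> TP"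

lemma TP_cont: "q \<in> TP \<Longrightarrow> continuous_on UNIV q"
proof (induction rule: TP.induct)
  case (gen k c)
  show ?case by (intro continuous_intros)
next
  case (add f g)
  then show ?case by (intro continuous_on_add)
qed

lemma TP_borel: "q \<in> TP \<Longrightarrow> q \<in> borel_measurable borel"
  by (rule borel_measurable_continuous_onI[OF TP_cont])

lemma TP_bdd: "q \<in> TP \<Longrightarrow> \<exists>B. \<forall>x. norm (q x) \<le> B"
proof (induction rule: TP.induct)
  case (gen k c)
  then show ?case by (intro exI[of _ "norm c"]) (simp add: norm_mult)
next
  case (add f g)
  then obtain B1 B2 where "\<forall>x. norm (f x) \<le> B1" "\<forall>x. norm (g x) \<le> B2" by blast
  then have "norm (f x + g x) \<le> B1 + B2" for x
    by (meson add_mono norm_triangle_ineq order_trans)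
  then show ?case by blast
qed

lemma TP_mult_gen: "q \<in> TP \<Longrightarrow> int_vec k \<Longrightarrow> (\<lambda>x. (c * cis (k \<bullet> x)) * q x) \<in> TP"
proof (induction rule: TP.induct)
  case (gen l d)
  have "cis ((k + l) \<bullet> x) = cis (k \<bullet> x) * cis (l \<bullet> x)" for x
    by (simp add: inner_add_left cis_mult)
  then have eq: "(\<lambda>x. (c * cis (k \<bullet> x)) * (d * cis (l \<bullet> x))) = (\<lambda>x. (c * d) * cis ((k + l) \<bullet> x))"
    by (simp add: mult_ac)
  have "int_vec (k + l)" using gen int_vec_add by blast
  then show ?case unfolding eq by (rule TP.gen)
next
  case (add f g)
  have eq: "(\<lambda>x. (c * cis (k \<bullet> x)) * (f x + g x)) = (\<lambda>x. (c * cis (k \<bullet> x)) * f x + (c * cis (k \<bullet> x)) * g x)"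
    by (simp add: distrib_left)
  show ?case unfolding eq using add by (intro TP.add)
qed

lemma TP_mult: "p \<in> TP \<Longrightarrow> q \<in> TP \<Longrightarrow> (\<lambda>x. p x * q x) \<in> TP"
proof (induction rule: TP.induct)
  case (gen k c)
  then show ?case using TP_mult_gen by blast
next
  case (add f g)
  have eq: "(\<lambda>x. (f x + g x) * q x) = (\<lambda>x. f x * q x + g x * q x)"
    by (simp add: distrib_right)
  show ?case unfolding eq using add by (intro TP.add)
qed

lemma integrable_bdd_mult:
  fixes F :: "'a \<Rightarrow> real" and G :: "'a \<Rightarrow> 'b::{banach, second_countable_topology}"
  assumes F: "integrable M F" and G: "G \<in> borel_measurable M" and B: "\<And>x. norm (G x) \<le> B"
  shows "integrable M (\<lambda>x. F x *\<^sub>R G x)"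
proof (rule Bochner_Integration.integrable_bound[OF integrable_scaleR_right[OF F, of B]])
  show "(\<lambda>x. F x *\<^sub>R G x) \<in> borel_measurable M"
    using F G by (intro borel_measurable_scaleR) auto
  show "AE x in M. norm (F x *\<^sub>R G x) \<le> norm (B *\<^sub>R F x)"
  proof (intro AE_I2)
    fix x
    have B0: "0 \<le> B" using B[of x] norm_ge_zero order_trans by blast
    have "norm (F x *\<^sub>R G x) = \<bar>F x\<bar> * norm (G x)" by simp
    also have "\<dots> \<le> \<bar>F x\<bar> * B" using B[of x] by (intro mult_left_mono) auto
    also have "\<dots> = norm (B *\<^sub>R F x)" using B0 by (simp add: abs_mult)
    finally show "norm (F x *\<^sub>R G x) \<le> norm (B *\<^sub>R F x)" .
  qed
qed

definition conv :: "(real^'n \<Rightarrow> real) \<Rightarrow> (real^'n \<Rightarrow> 'b::{banach, second_countable_topology}) \<Rightarrow> real^'n \<Rightarrow> 'b" where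
  "conv K \<phi> x = (\<integral>y. K y *\<^sub>R \<phi> (x + y) \<partial>lborel)"

lemma conv_borel:
  fixes \<phi> :: "real^'n \<Rightarrow> 'b::{banach, second_countable_topology}"
  assumes [measurable]: "K \<in> borel_measurable borel" "\<phi> \<in> borel_measurable borel"
  shows "conv K \<phi> \<in> borel_measurable borel"
proof -
  have "(\<lambda>(x, y). K y *\<^sub>R \<phi> (x + y)) \<in> borel_measurable (lborel \<Otimes>\<^sub>M (lborel :: (real^'n) measure))"
    by measurable
  from lborel.borel_measurable_lebesgue_integral[OF this] show ?thesis
    unfolding conv_def by simp
qed

lemma conv_bound:
  fixes \<phi> :: "real^'n \<Rightarrow> 'b::{banach, second_countable_topology}"
  assumes K: "integrable lborel K" and [measurable]: "K \<in> borel_measurable borel" "\<phi> \<in> borel_measurable borel"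
    and B: "\<And>x. norm (\<phi> x) \<le> B"
  shows "norm (conv K \<phi> x) \<le> B * (\<integral>y. \<bar>K y\<bar> \<partial>lborel)"
proof -
  have "norm (conv K \<phi> x) \<le> (\<integral>y. norm (K y *\<^sub>R \<phi> (x + y)) \<partial>lborel)"
    unfolding conv_def by (rule integral_norm_bound)
  also have "\<dots> \<le> (\<integral>y. B * \<bar>K y\<bar> \<partial>lborel)"
  proof (rule integral_mono)
    show "integrable lborel (\<lambda>y. norm (K y *\<^sub>R \<phi> (x + y)))"
      by (intro integrable_norm integrable_bdd_mult[OF K, where B=B]) (auto simp: B)
    show "integrable lborel (\<lambda>y. B * \<bar>K y\<bar>)"
      using K by (intro integrable_mult_right integrable_abs)
    fix y show "norm (K y *\<^sub>R \<phi> (x + y)) \<le> B * \<bar>K y\<bar>"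
      using B[of "x + y"] by (simp add: mult.commute[of B] mult_left_mono)
  qed
  also have "\<dots> = B * (\<integral>y. \<bar>K y\<bar> \<partial>lborel)" by simp
  finally show ?thesis .
qed


lemma LINT_fc:
  "(\<integral>x. indicator torus_cube x *\<^sub>R (complex_of_real (h x) * cis (-(n \<bullet> x))) \<partial>lebesgue)
    = complex_of_real ((2*pi)^CARD('n)) * fourier_coeff h (n :: real^'n)"
  by (simp add: fourier_coeff_def set_lebesgue_integral_def)

lemma TP_int_lhs:
  fixes f :: "real^'n \<Rightarrow> real"
  assumes fm: "f \<in> borel_measurable lebesgue" and fi: "integrable lebesgue (\<lambda>x. indicator torus_cube x * f x)"
    and q: "q \<in> TP"
  shows "integrable lebesgue (\<lambda>x. (indicator torus_cube x * f x) *\<^sub>R q x)"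
proof -
  obtain B where B: "\<And>x. norm (q x) \<le> B" using TP_bdd[OF q] by blast
  show ?thesis
    by (rule integrable_bdd_mult[OF fi _ B]) (rule borel_leb[OF TP_borel[OF q]])
qed

lemma TP_int_inner:
  fixes K :: "real^'n \<Rightarrow> real"
  assumes Ki: "integrable lborel K" and Km: "K \<in> borel_measurable borel" and q: "q \<in> TP"
  shows "integrable lborel (\<lambda>y. K y *\<^sub>R q (x + y))"
proof -
  obtain B where B: "\<And>x. norm (q x) \<le> B" using TP_bdd[OF q] by blast
  have [measurable]: "q \<in> borel_measurable borel" by (rule TP_borel[OF q])
  show ?thesis
    by (rule integrable_bdd_mult[OF Ki _ B]) measurable
qed

lemma TP_int_rhs:
  fixes g K :: "real^'n \<Rightarrow> real"
  assumes gm: "g \<in> borel_measurable lebesgue" and gi: "integrable lebesgue (\<lambda>x. indicator torus_cube x * g x)"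
    and Ki: "integrable lborel K" and Km: "K \<in> borel_measurable borel" and q: "q \<in> TP"
  shows "integrable lebesgue (\<lambda>x. (indicator torus_cube x * g x) *\<^sub>R conv K q x)"
proof -
  obtain B where B: "\<And>x. norm (q x) \<le> B" using TP_bdd[OF q] by blast
  have [measurable]: "q \<in> borel_measurable borel" by (rule TP_borel[OF q])
  show ?thesis
  proof (rule integrable_bdd_mult[OF gi])
    show "conv K q \<in> borel_measurable lebesgue"
      by (rule borel_leb[OF conv_borel[OF Km]]) simp
    show "norm (conv K q x) \<le> B * (\<integral>y. \<bar>K y\<bar> \<partial>lborel)" for x
      by (rule conv_bound[OF Ki Km _ B]) simp
  qed
qed

lemma TP_identity:
  fixes f g K sq :: "real^'n \<Rightarrow> real"
  assumes fm: "f \<in> borel_measurable lebesgue" and fi: "integrable lebesgue (\<lambda>x. indicator torus_cube x * f x)"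
    and gm: "g \<in> borel_measurable lebesgue" and gi: "integrable lebesgue (\<lambda>x. indicator torus_cube x * g x)"
    and fc: "\<And>k. int_vec k \<Longrightarrow> fourier_coeff f k = fourier_coeff g k * complex_of_real (sq k)"
    and sqm: "\<And>k. sq (-k) = sq k"
    and Ki: "integrable lborel K" and Km: "K \<in> borel_measurable borel"
    and KF: "\<And>\<xi>. (\<integral>y. K y *\<^sub>R cis (\<xi> \<bullet> y) \<partial>lborel) = complex_of_real (sq \<xi>)"
    and q: "q \<in> TP"
  shows "(\<integral>x. (indicator torus_cube x * f x) *\<^sub>R q x \<partial>lebesgue)
       = (\<integral>x. (indicator torus_cube x * g x) *\<^sub>R conv K q x \<partial>lebesgue)"
  using q
proof (induction rule: TP.induct)
  case (gen k c)
  define Z where "Z = complex_of_real ((2*pi)^CARD('n))"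
  have mk: "int_vec (-k)" using gen by (rule int_vec_uminus)
  have "(\<integral>x. (indicator torus_cube x * f x) *\<^sub>R (c * cis (k \<bullet> x)) \<partial>lebesgue)
      = (\<integral>x. c * (indicator torus_cube x *\<^sub>R (complex_of_real (f x) * cis (-((-k) \<bullet> x)))) \<partial>lebesgue)"
    by (intro Bochner_Integration.integral_cong) (auto simp: scaleR_conv_of_real indicator_def)
  also have "\<dots> = c * (Z * fourier_coeff f (-k))"
    unfolding integral_mult_right_zero LINT_fc Z_def ..
  finally have L: "(\<integral>x. (indicator torus_cube x * f x) *\<^sub>R (c * cis (k \<bullet> x)) \<partial>lebesgue) = c * (Z * fourier_coeff f (-k))" .
  have cv: "conv K (\<lambda>x. c * cis (k \<bullet> x)) x = (c * cis (k \<bullet> x)) * complex_of_real (sq k)" for x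
  proof -
    have "conv K (\<lambda>x. c * cis (k \<bullet> x)) x = (\<integral>y. (c * cis (k \<bullet> x)) * (K y *\<^sub>R cis (k \<bullet> y)) \<partial>lborel)"
      unfolding conv_def
      by (intro Bochner_Integration.integral_cong) (auto simp: inner_add_right cis_mult[symmetric] scaleR_conv_of_real mult_ac)
    also have "\<dots> = (c * cis (k \<bullet> x)) * complex_of_real (sq k)"
      unfolding integral_mult_right_zero KF ..
    finally show ?thesis .
  qed
  have "(\<integral>x. (indicator torus_cube x * g x) *\<^sub>R conv K (\<lambda>x. c * cis (k \<bullet> x)) x \<partial>lebesgue)
      = (\<integral>x. (c * complex_of_real (sq k)) * (indicator torus_cube x *\<^sub>R (complex_of_real (g x) * cis (-((-k) \<bullet> x)))) \<partial>lebesgue)"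
    unfolding cv by (intro Bochner_Integration.integral_cong) (auto simp: scaleR_conv_of_real indicator_def)
  also have "\<dots> = (c * complex_of_real (sq k)) * (Z * fourier_coeff g (-k))"
    unfolding integral_mult_right_zero LINT_fc Z_def ..
  finally have R: "(\<integral>x. (indicator torus_cube x * g x) *\<^sub>R conv K (\<lambda>x. c * cis (k \<bullet> x)) x \<partial>lebesgue)
      = (c * complex_of_real (sq k)) * (Z * fourier_coeff g (-k))" .
  show ?case unfolding L R fc[OF mk] sqm by (simp add: mult_ac)
next
  case (add q1 q2)
  have "(\<integral>x. (indicator torus_cube x * f x) *\<^sub>R (q1 x + q2 x) \<partial>lebesgue)
     = (\<integral>x. (indicator torus_cube x * f x) *\<^sub>R q1 x + (indicator torus_cube x * f x) *\<^sub>R q2 x \<partial>lebesgue)"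
    by (simp add: scaleR_add_right)
  also have "\<dots> = (\<integral>x. (indicator torus_cube x * f x) *\<^sub>R q1 x \<partial>lebesgue) + (\<integral>x. (indicator torus_cube x * f x) *\<^sub>R q2 x \<partial>lebesgue)"
    by (rule Bochner_Integration.integral_add) (rule TP_int_lhs[OF fm fi], fact)+
  also have "\<dots> = (\<integral>x. (indicator torus_cube x * g x) *\<^sub>R conv K q1 x \<partial>lebesgue) + (\<integral>x. (indicator torus_cube x * g x) *\<^sub>R conv K q2 x \<partial>lebesgue)"
    using add.IH by simp
  also have "\<dots> = (\<integral>x. (indicator torus_cube x * g x) *\<^sub>R conv K q1 x + (indicator torus_cube x * g x) *\<^sub>R conv K q2 x \<partial>lebesgue)"
    by (rule Bochner_Integration.integral_add[symmetric]) (rule TP_int_rhs[OF gm gi Ki Km], fact)+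
  also have "\<dots> = (\<integral>x. (indicator torus_cube x * g x) *\<^sub>R conv K (\<lambda>x. q1 x + q2 x) x \<partial>lebesgue)"
  proof (intro Bochner_Integration.integral_cong refl)
    fix x
    have "conv K (\<lambda>x. q1 x + q2 x) x = conv K q1 x + conv K q2 x"
      unfolding conv_def scaleR_add_right
      by (rule Bochner_Integration.integral_add) (rule TP_int_inner[OF Ki Km], fact)+
    then show "(indicator torus_cube x * g x) *\<^sub>R conv K q1 x + (indicator torus_cube x * g x) *\<^sub>R conv K q2 x
        = (indicator torus_cube x * g x) *\<^sub>R conv K (\<lambda>x. q1 x + q2 x) x"
      by (simp add: scaleR_add_right)
  qed
  finally show ?case .
qed


definition E :: "real^'n \<Rightarrow> complex^'n" where
  "E x = (\<chi> i. cis (x $ i))"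

lemma E_cont: "continuous_on UNIV E"
  unfolding E_def by (intro continuous_on_vec_lambda continuous_on_cis continuous_on_component continuous_on_id)

lemma cis_add_2pi_int: "m \<in> \<int> \<Longrightarrow> cis (a + 2 * pi * m) = cis a"
  by (simp add: cis_mult[symmetric])

lemma E_periodic: "int_vec k \<Longrightarrow> E (x + (2*pi) *\<^sub>R k) = E x"
proof -
  assume k: "int_vec k"
  have "cis (x$i + 2 * pi * k$i) = cis (x$i)" for i
    using k unfolding int_vec_def by (intro cis_add_2pi_int) auto
  then show ?thesis unfolding E_def by (simp add: vec_eq_iff)
qed

definition red :: "real^'n \<Rightarrow> real^'n" where
  "red x = (\<chi> i. x$i - 2 * pi * of_int \<lfloor>x$i / (2 * pi)\<rfloor>)"

definition redk :: "real^'n \<Rightarrow> real^'n" where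
  "redk x = (\<chi> i. of_int \<lfloor>x$i / (2 * pi)\<rfloor>)"

lemma redk_int: "int_vec (redk x)"
  by (simp add: int_vec_def redk_def)

lemma red_eq: "x = red x + (2*pi) *\<^sub>R redk x"
  by (simp add: vec_eq_iff red_def redk_def)

lemma red_in_cube: "red x \<in> torus_cube"
proof -
  have "0 \<le> x$i - 2 * pi * of_int \<lfloor>x$i / (2 * pi)\<rfloor> \<and> x$i - 2 * pi * of_int \<lfloor>x$i / (2 * pi)\<rfloor> \<le> 2 * pi" for i
  proof -
    have a: "of_int \<lfloor>x$i / (2 * pi)\<rfloor> \<le> x$i / (2 * pi)" "x$i / (2 * pi) < of_int \<lfloor>x$i / (2 * pi)\<rfloor> + 1"
      by linarith+
    have "2 * pi * of_int \<lfloor>x$i / (2 * pi)\<rfloor> \<le> 2 * pi * (x$i / (2 * pi))"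
      using a(1) by (intro mult_left_mono) auto
    moreover have "2 * pi * (x$i / (2 * pi)) \<le> 2 * pi * (of_int \<lfloor>x$i / (2 * pi)\<rfloor> + 1)"
      using a(2) by (intro mult_left_mono) auto
    ultimately show ?thesis by (simp add: field_simps)
  qed
  then show ?thesis unfolding torus_cube_def mem_box_cart red_def by simp
qed

lemma E_red: "E (red x) = E x"
proof -
  have "E x = E (red x + (2*pi) *\<^sub>R redk x)" using red_eq[of x] by simp
  also have "\<dots> = E (red x)" by (rule E_periodic[OF redk_int])
  finally show ?thesis by simp
qed

lemma range_E: "range E = E ` torus_cube"
proof
  show "range E \<subseteq> E ` torus_cube"
  proof
    fix z assume "z \<in> range E"
    then obtain x where "z = E x" by blast
    then show "z \<in> E ` torus_cube" using E_red[of x] red_in_cube[of x] by (metis image_eqI)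
  qed
qed auto

lemma compact_range_E: "compact (range (E :: real^'n \<Rightarrow> complex^'n))"
  unfolding range_E torus_cube_def
  by (rule compact_continuous_image) (auto intro: continuous_on_subset[OF E_cont] compact_cbox)

inductive_set Rg :: "(complex^'n \<Rightarrow> real) set" where
  const: "(\<lambda>_. c) \<in> Rg"
| re: "(\<lambda>z. Re (z $ i)) \<in> Rg"
| im: "(\<lambda>z. Im (z $ i)) \<in> Rg"
| add: "f \<in> Rg \<Longrightarrow> g \<in> Rg \<Longrightarrow> (\<lambda>z. f z + g z) \<in> Rg"
| mult: "f \<in> Rg \<Longrightarrow> g \<in> Rg \<Longrightarrow> (\<lambda>z. f z * g z) \<in> Rg"

lemma Rg_cont: "r \<in> Rg \<Longrightarrow> continuous_on S r"
proof (induction rule: Rg.induct)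
  case (const c) show ?case by (rule continuous_on_const)
next
  case (re i) show ?case
    by (rule linear_continuous_on[OF bounded_linear_compose[OF bounded_linear_Re bounded_linear_vec_nth]])
next
  case (im i) show ?case
    by (rule linear_continuous_on[OF bounded_linear_compose[OF bounded_linear_Im bounded_linear_vec_nth]])
next
  case (add f g) then show ?case by (intro continuous_on_add)
next
  case (mult f g) then show ?case by (intro continuous_on_mult)
qed

lemma Rg_ring: "function_ring_on Rg (range (E :: real^'n \<Rightarrow> complex^'n))"
proof (unfold_locales)
  show "compact (range (E :: real^'n \<Rightarrow> complex^'n))" by (rule compact_range_E)
next
  fix f :: "complex^'n \<Rightarrow> real" assume "f \<in> Rg" then show "continuous_on (range E) f" by (rule Rg_cont)
next
  fix f g :: "complex^'n \<Rightarrow> real" assume "f \<in> Rg" "g \<in> Rg" then show "(\<lambda>x. f x + g x) \<in> Rg" by (rule Rg.add)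
next
  fix f g :: "complex^'n \<Rightarrow> real" assume "f \<in> Rg" "g \<in> Rg" then show "(\<lambda>x. f x * g x) \<in> Rg" by (rule Rg.mult)
next
  fix c show "(\<lambda>_. c) \<in> Rg" by (rule Rg.const)
next
  fix x y :: "complex^'n" assume "x \<noteq> y"
  then obtain i where i: "x $ i \<noteq> y $ i" by (auto simp: vec_eq_iff)
  then have disj: "Re (x $ i) \<noteq> Re (y $ i) \<or> Im (x $ i) \<noteq> Im (y $ i)" by (simp add: complex_eq_iff)
  show "\<exists>f\<in>Rg. f x \<noteq> f y"
  proof (cases "Re (x $ i) \<noteq> Re (y $ i)")
    case True then show ?thesis by (intro bexI[OF _ Rg.re[of i]]) simp
  next
    case False then have "Im (x $ i) \<noteq> Im (y $ i)" using disj by blast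
    then show ?thesis by (intro bexI[OF _ Rg.im[of i]]) simp
  qed
qed

lemma inner_axis1: "axis i 1 \<bullet> x = x $ i"
  by (simp add: inner_axis' inner_axis)

lemma Rg_TP:
  fixes r :: "complex^'n \<Rightarrow> real"
  shows "r \<in> Rg \<Longrightarrow> \<exists>q\<in>TP. \<forall>x::real^'n. complex_of_real (r (E x)) = q x"
proof (induction rule: Rg.induct)
  case (const c)
  have "(\<lambda>x::real^'n. complex_of_real c * cis (0 \<bullet> x)) \<in> TP" by (rule TP.gen[OF int_vec_0])
  then show ?case by force
next
  case (re i)
  define q where "q = (\<lambda>x::real^'n. (\<lambda>x. (1/2) * cis (axis i 1 \<bullet> x)) x + (\<lambda>x. (1/2) * cis ((- axis i 1) \<bullet> x)) x)"
  have "q \<in> TP" unfolding q_def by (intro TP.add TP.gen int_vec_axis int_vec_uminus)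
  moreover have "complex_of_real (Re (E x $ i)) = q x" for x
    by (simp add: q_def E_def inner_axis1 complex_eq_iff)
  ultimately show ?case by blast
next
  case (im i)
  define q where "q = (\<lambda>x::real^'n. (\<lambda>x. (- \<i>/2) * cis (axis i 1 \<bullet> x)) x + (\<lambda>x. (\<i>/2) * cis ((- axis i 1) \<bullet> x)) x)"
  have "q \<in> TP" unfolding q_def by (intro TP.add TP.gen int_vec_axis int_vec_uminus)
  moreover have "complex_of_real (Im (E x $ i)) = q x" for x
    by (simp add: q_def E_def inner_axis1 complex_eq_iff)
  ultimately show ?case by blast
next
  case (add f g)
  then obtain p q where "p \<in> TP" "q \<in> TP" "\<forall>x. complex_of_real (f (E x)) = p x" "\<forall>x. complex_of_real (g (E x)) = q x"
    by blast
  then have "\<forall>x. complex_of_real (f (E x) + g (E x)) = p x + q x" by simp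
  moreover have "(\<lambda>x. p x + q x) \<in> TP" using \<open>p \<in> TP\<close> \<open>q \<in> TP\<close> by (rule TP.add)
  ultimately show ?case by (intro bexI[of _ "\<lambda>x. p x + q x"]) auto
next
  case (mult f g)
  then obtain p q where "p \<in> TP" "q \<in> TP" "\<forall>x. complex_of_real (f (E x)) = p x" "\<forall>x. complex_of_real (g (E x)) = q x"
    by blast
  then have "\<forall>x. complex_of_real (f (E x) * g (E x)) = p x * q x" by simp
  moreover have "(\<lambda>x. p x * q x) \<in> TP" using \<open>p \<in> TP\<close> \<open>q \<in> TP\<close> by (rule TP_mult)
  ultimately show ?case by (intro bexI[of _ "\<lambda>x. p x * q x"]) auto
qed


lemma L_int:
  fixes f \<phi> :: "real^'n \<Rightarrow> real"
  assumes fi: "integrable lebesgue (\<lambda>x. indicator torus_cube x * f x)"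
    and \<phi>m: "\<phi> \<in> borel_measurable borel" and B: "\<And>x. \<bar>\<phi> x\<bar> \<le> B"
  shows "integrable lebesgue (\<lambda>x. (indicator torus_cube x * f x) * \<phi> x)"
  using integrable_bdd_mult[OF fi borel_leb[OF \<phi>m], of B] B by simp

lemma L_bound:
  fixes f \<phi> :: "real^'n \<Rightarrow> real"
  assumes fi: "integrable lebesgue (\<lambda>x. indicator torus_cube x * f x)"
    and \<phi>m: "\<phi> \<in> borel_measurable borel" and B: "\<And>x. \<bar>\<phi> x\<bar> \<le> B"
  shows "\<bar>\<integral>x. (indicator torus_cube x * f x) * \<phi> x \<partial>lebesgue\<bar> \<le> B * (\<integral>x. \<bar>indicator torus_cube x * f x\<bar> \<partial>lebesgue)"
proof -
  have "\<bar>\<integral>x. (indicator torus_cube x * f x) * \<phi> x \<partial>lebesgue\<bar> \<le> (\<integral>x. \<bar>(indicator torus_cube x * f x) * \<phi> x\<bar> \<partial>lebesgue)"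
    by (rule integral_abs_bound)
  also have "\<dots> \<le> (\<integral>x. B * \<bar>indicator torus_cube x * f x\<bar> \<partial>lebesgue)"
  proof (rule integral_mono)
    show "integrable lebesgue (\<lambda>x. \<bar>(indicator torus_cube x * f x) * \<phi> x\<bar>)"
      by (intro integrable_abs L_int[OF fi \<phi>m B])
    show "integrable lebesgue (\<lambda>x. B * \<bar>indicator torus_cube x * f x\<bar>)"
      by (intro integrable_mult_right integrable_abs fi)
    fix x show "\<bar>(indicator torus_cube x * f x) * \<phi> x\<bar> \<le> B * \<bar>indicator torus_cube x * f x\<bar>"
      using B[of x] by (simp add: abs_mult mult.commute[of B] mult_left_mono)
  qed
  also have "\<dots> = B * (\<integral>x. \<bar>indicator torus_cube x * f x\<bar> \<partial>lebesgue)" by simp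
  finally show ?thesis .
qed

lemma conv_borel_real:
  fixes K \<phi> :: "real^'n \<Rightarrow> real"
  assumes "K \<in> borel_measurable borel" "\<phi> \<in> borel_measurable borel"
  shows "conv K \<phi> \<in> borel_measurable borel"
  by (rule conv_borel[OF assms])

lemma conv_bound_real:
  fixes K \<phi> :: "real^'n \<Rightarrow> real"
  assumes Ki: "integrable lborel K" and Km: "K \<in> borel_measurable borel" and \<phi>m: "\<phi> \<in> borel_measurable borel"
    and B: "\<And>x. \<bar>\<phi> x\<bar> \<le> B"
  shows "\<bar>conv K \<phi> x\<bar> \<le> B * (\<integral>y. \<bar>K y\<bar> \<partial>lborel)"
  using conv_bound[OF Ki Km \<phi>m, of B] B by simp

lemma conv_diff:
  fixes K \<phi> \<psi> :: "real^'n \<Rightarrow> real"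
  assumes Ki: "integrable lborel K" and Km[measurable]: "K \<in> borel_measurable borel"
    and \<phi>m[measurable]: "\<phi> \<in> borel_measurable borel" and B: "\<And>x. \<bar>\<phi> x\<bar> \<le> B"
    and \<psi>m[measurable]: "\<psi> \<in> borel_measurable borel" and B': "\<And>x. \<bar>\<psi> x\<bar> \<le> B'"
  shows "conv K \<phi> x - conv K \<psi> x = conv K (\<lambda>x. \<phi> x - \<psi> x) x"
proof -
  have i1: "integrable lborel (\<lambda>y. K y *\<^sub>R \<phi> (x + y))"
    by (rule integrable_bdd_mult[OF Ki _, of _ B]) (auto simp: B)
  have i2: "integrable lborel (\<lambda>y. K y *\<^sub>R \<psi> (x + y))"
    by (rule integrable_bdd_mult[OF Ki _, of _ B']) (auto simp: B')
  show ?thesis unfolding conv_def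
    using Bochner_Integration.integral_diff[OF i1 i2] by (simp add: algebra_simps)
qed

lemma L_diff:
  fixes f \<phi> \<psi> :: "real^'n \<Rightarrow> real"
  assumes fi: "integrable lebesgue (\<lambda>x. indicator torus_cube x * f x)"
    and \<phi>m: "\<phi> \<in> borel_measurable borel" and B: "\<And>x. \<bar>\<phi> x\<bar> \<le> B"
    and \<psi>m: "\<psi> \<in> borel_measurable borel" and B': "\<And>x. \<bar>\<psi> x\<bar> \<le> B'"
  shows "(\<integral>x. (indicator torus_cube x * f x) * \<phi> x \<partial>lebesgue) - (\<integral>x. (indicator torus_cube x * f x) * \<psi> x \<partial>lebesgue)
       = (\<integral>x. (indicator torus_cube x * f x) * (\<phi> x - \<psi> x) \<partial>lebesgue)"
  using Bochner_Integration.integral_diff[OF L_int[OF fi \<phi>m B] L_int[OF fi \<psi>m B']]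
  by (simp add: algebra_simps)

lemma le_eps_zero:
  fixes D C :: real
  assumes "C \<ge> 0" and "\<And>e. e > 0 \<Longrightarrow> \<bar>D\<bar> \<le> e * C"
  shows "D = 0"
proof (rule ccontr)
  assume "D \<noteq> 0"
  define e where "e = \<bar>D\<bar> / (2 * (C + 1))"
  have e: "e > 0" using \<open>D \<noteq> 0\<close> assms(1) by (simp add: e_def)
  have "\<bar>D\<bar> \<le> e * C" by (rule assms(2)[OF e])
  also have "\<dots> \<le> e * (C + 1)" using e by simp
  also have "\<dots> = \<bar>D\<bar> / 2"
  proof -
    have c: "C + 1 \<noteq> 0" using assms(1) by simp
    have "e * (C + 1) = \<bar>D\<bar> * ((C + 1) / (C + 1)) / 2" unfolding e_def by (simp add: field_simps del: divide_self_if)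
    then show ?thesis using c by simp
  qed
  finally show False using \<open>D \<noteq> 0\<close> by simp
qed

lemma real_identity:
  fixes f g K sq :: "real^'n \<Rightarrow> real" and h :: "complex^'n \<Rightarrow> real"
  assumes fm: "f \<in> borel_measurable lebesgue" and fi: "integrable lebesgue (\<lambda>x. indicator torus_cube x * f x)"
    and gm: "g \<in> borel_measurable lebesgue" and gi: "integrable lebesgue (\<lambda>x. indicator torus_cube x * g x)"
    and fc: "\<And>k. int_vec k \<Longrightarrow> fourier_coeff f k = fourier_coeff g k * complex_of_real (sq k)"
    and sqm: "\<And>k. sq (-k) = sq k"
    and Ki: "integrable lborel K" and Km[measurable]: "K \<in> borel_measurable borel"
    and KF: "\<And>\<xi>. (\<integral>y. K y *\<^sub>R cis (\<xi> \<bullet> y) \<partial>lborel) = complex_of_real (sq \<xi>)"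
    and h: "continuous_on (range E) h"
  shows "(\<integral>x. (indicator torus_cube x * f x) * h (E x) \<partial>lebesgue)
       = (\<integral>x. (indicator torus_cube x * g x) * conv K (\<lambda>x. h (E x)) x \<partial>lebesgue)"
proof -
  define L where "L \<phi> = (\<integral>x. (indicator torus_cube x * f x) * \<phi> x \<partial>lebesgue)" for \<phi> :: "real^'n \<Rightarrow> real"
  define R where "R \<phi> = (\<integral>x. (indicator torus_cube x * g x) * conv K \<phi> x \<partial>lebesgue)" for \<phi> :: "real^'n \<Rightarrow> real"
  define IK where "IK = (\<integral>y. \<bar>K y\<bar> \<partial>lborel)"
  define If where "If = (\<integral>x. \<bar>indicator torus_cube x * f x\<bar> \<partial>lebesgue)"
  define Ig where "Ig = (\<integral>x. \<bar>indicator torus_cube x * g x\<bar> \<partial>lebesgue)"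
  have IK0: "IK \<ge> 0" unfolding IK_def by simp
  have If0: "If \<ge> 0" unfolding If_def by simp
  have Ig0: "Ig \<ge> 0" unfolding Ig_def by simp
  have Rg_id: "L (\<lambda>x. r (E x)) = R (\<lambda>x. r (E x))" if r: "r \<in> Rg" for r
  proof -
    obtain q where q: "q \<in> TP" "\<And>x. complex_of_real (r (E x)) = q x" using Rg_TP[OF r] by blast
    have cq: "conv K q x = complex_of_real (conv K (\<lambda>x. r (E x)) x)" for x
    proof -
      have "conv K q x = (\<integral>y. complex_of_real (K y * r (E (x + y))) \<partial>lborel)"
        unfolding conv_def by (intro Bochner_Integration.integral_cong) (auto simp: q(2)[symmetric] scaleR_conv_of_real)
      also have "\<dots> = complex_of_real (conv K (\<lambda>x. r (E x)) x)"
        unfolding integral_complex_of_real conv_def by simp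
      finally show ?thesis .
    qed
    have "complex_of_real (L (\<lambda>x. r (E x))) = (\<integral>x. (indicator torus_cube x * f x) *\<^sub>R q x \<partial>lebesgue)"
      unfolding L_def integral_complex_of_real[symmetric]
      by (intro Bochner_Integration.integral_cong) (auto simp: q(2)[symmetric] scaleR_conv_of_real)
    also have "\<dots> = (\<integral>x. (indicator torus_cube x * g x) *\<^sub>R conv K q x \<partial>lebesgue)"
      by (rule TP_identity[OF fm fi gm gi fc sqm Ki Km KF q(1)])
    also have "\<dots> = complex_of_real (R (\<lambda>x. r (E x)))"
      unfolding R_def integral_complex_of_real[symmetric]
      by (intro Bochner_Integration.integral_cong) (auto simp: cq scaleR_conv_of_real)
    finally show ?thesis by simp
  qed
  have hE: "continuous_on UNIV (\<lambda>x. h (E x))"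
    by (rule continuous_on_compose2[OF h E_cont]) auto
  have hEm[measurable]: "(\<lambda>x. h (E x)) \<in> borel_measurable borel"
    by (rule borel_measurable_continuous_onI[OF hE])
  obtain Bh where Bh: "\<And>z. z \<in> range E \<Longrightarrow> \<bar>h z\<bar> \<le> Bh"
    using compact_imp_bounded[OF compact_continuous_image[OF h compact_range_E]]
    unfolding bounded_iff by fastforce
  have Bh': "\<bar>h (E x)\<bar> \<le> Bh" for x using Bh by blast
  interpret FR: function_ring_on Rg "range (E :: real^'n \<Rightarrow> complex^'n)" by (rule Rg_ring)
  show ?thesis
  proof -
    have "L (\<lambda>x. h (E x)) - R (\<lambda>x. h (E x)) = 0"
    proof (rule le_eps_zero)
      show "0 \<le> If + IK * Ig" using If0 IK0 Ig0 by simp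
      fix e :: real assume e: "e > 0"
      obtain r where r: "r \<in> Rg" "\<And>z. z \<in> range E \<Longrightarrow> \<bar>h z - r z\<bar> < e"
        using FR.Stone_Weierstrass_basic[OF h e] by blast
      have rE: "continuous_on UNIV (\<lambda>x. r (E x))"
        by (rule continuous_on_compose2[OF Rg_cont[OF r(1)] E_cont]) auto
      have rEm[measurable]: "(\<lambda>x. r (E x)) \<in> borel_measurable borel"
        by (rule borel_measurable_continuous_onI[OF rE])
      have d: "\<bar>h (E x) - r (E x)\<bar> \<le> e" for x using r(2)[of "E x"] by auto
      have Br: "\<bar>r (E x)\<bar> \<le> Bh + e" for x using d[of x] Bh'[of x] by linarith
      have dm[measurable]: "(\<lambda>x. h (E x) - r (E x)) \<in> borel_measurable borel" by measurable
      have "L (\<lambda>x. h (E x)) - R (\<lambda>x. h (E x))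
          = (L (\<lambda>x. h (E x)) - L (\<lambda>x. r (E x))) - (R (\<lambda>x. h (E x)) - R (\<lambda>x. r (E x)))"
        using Rg_id[OF r(1)] by simp
      also have "L (\<lambda>x. h (E x)) - L (\<lambda>x. r (E x)) = L (\<lambda>x. h (E x) - r (E x))"
        unfolding L_def by (rule L_diff[OF fi hEm Bh' rEm Br])
      also have "R (\<lambda>x. h (E x)) - R (\<lambda>x. r (E x)) = (\<integral>x. (indicator torus_cube x * g x) * conv K (\<lambda>x. h (E x) - r (E x)) x \<partial>lebesgue)"
      proof -
        have cm1: "conv K (\<lambda>x. h (E x)) \<in> borel_measurable borel" by (rule conv_borel_real[OF Km hEm])
        have cm2: "conv K (\<lambda>x. r (E x)) \<in> borel_measurable borel" by (rule conv_borel_real[OF Km rEm])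
        have "R (\<lambda>x. h (E x)) - R (\<lambda>x. r (E x)) = (\<integral>x. (indicator torus_cube x * g x) * (conv K (\<lambda>x. h (E x)) x - conv K (\<lambda>x. r (E x)) x) \<partial>lebesgue)"
          unfolding R_def
          by (rule L_diff[OF gi cm1 conv_bound_real[OF Ki Km hEm Bh'] cm2 conv_bound_real[OF Ki Km rEm Br]])
        also have "\<dots> = (\<integral>x. (indicator torus_cube x * g x) * conv K (\<lambda>x. h (E x) - r (E x)) x \<partial>lebesgue)"
          by (simp add: conv_diff[OF Ki Km hEm Bh' rEm Br])
        finally show ?thesis .
      qed
      finally have eq: "L (\<lambda>x. h (E x)) - R (\<lambda>x. h (E x)) = L (\<lambda>x. h (E x) - r (E x)) - (\<integral>x. (indicator torus_cube x * g x) * conv K (\<lambda>x. h (E x) - r (E x)) x \<partial>lebesgue)" .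
      have b1: "\<bar>L (\<lambda>x. h (E x) - r (E x))\<bar> \<le> e * If"
        unfolding L_def If_def by (rule L_bound[OF fi dm d])
      have b2: "\<bar>\<integral>x. (indicator torus_cube x * g x) * conv K (\<lambda>x. h (E x) - r (E x)) x \<partial>lebesgue\<bar> \<le> (e * IK) * Ig"
        unfolding Ig_def
        by (rule L_bound[OF gi conv_borel_real[OF Km dm]]) (unfold IK_def, rule conv_bound_real[OF Ki Km dm d])
      show "\<bar>L (\<lambda>x. h (E x)) - R (\<lambda>x. h (E x))\<bar> \<le> e * (If + IK * Ig)"
        unfolding eq using b1 b2 by (simp add: algebra_simps)
    qed
    then show ?thesis unfolding L_def R_def by simp
  qed
qed


lemma int_vec_countable: "countable {k :: real^'n. int_vec k}"
proof -
  have "{k :: real^'n. int_vec k} \<subseteq> (\<lambda>m. \<chi> i. of_int (m i)) ` (PiE UNIV (\<lambda>_. UNIV :: int set))"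
  proof
    fix k :: "real^'n" assume "k \<in> {k. int_vec k}"
    then have "\<forall>i. \<exists>n::int. k $ i = of_int n" by (auto simp: int_vec_def Ints_def)
    then obtain N where N: "\<And>i. k $ i = of_int (N i)" by metis
    have "k = (\<chi> i. of_int (N i))" by (simp add: vec_eq_iff N)
    moreover have "N \<in> PiE UNIV (\<lambda>_. UNIV :: int set)" by simp
    ultimately show "k \<in> (\<lambda>m. \<chi> i. of_int (m i)) ` (PiE UNIV (\<lambda>_. UNIV :: int set))" by blast
  qed
  moreover have "countable ((\<lambda>m. \<chi> i. of_int (m i)) ` (PiE UNIV (\<lambda>_. UNIV :: int set)) :: (real^'n) set)"
    by (intro countable_image countable_PiE) auto
  ultimately show ?thesis by (rule countable_subset)
qed

lemma periodic_transfer: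
  fixes P :: "(real^'n) set"
  assumes per: "\<And>x k. int_vec k \<Longrightarrow> x \<in> P \<Longrightarrow> x + (2*pi) *\<^sub>R k \<in> P"
    and neg: "negligible (P \<inter> torus_cube)"
  shows "negligible P"
proof -
  let ?F = "(\<lambda>k. (+) ((2*pi) *\<^sub>R k) ` (P \<inter> torus_cube)) ` {k. int_vec k}"
  have "P \<subseteq> \<Union> ?F"
  proof
    fix x assume x: "x \<in> P"
    have "red x = x + (2*pi) *\<^sub>R (- redk x)"
      using red_eq[of x] by (simp add: algebra_simps)
    then have "red x \<in> P" using per[OF int_vec_uminus[OF redk_int] x] by simp
    then have "red x \<in> P \<inter> torus_cube" using red_in_cube by blast
    moreover have "x = (2*pi) *\<^sub>R redk x + red x" using red_eq[of x] by (simp add: algebra_simps)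
    ultimately have "x \<in> (+) ((2*pi) *\<^sub>R redk x) ` (P \<inter> torus_cube)" by blast
    then show "x \<in> \<Union> ?F" using redk_int[of x] by blast
  qed
  moreover have "negligible (\<Union> ?F)"
  proof (rule negligible_countable_Union)
    show "countable ?F" by (intro countable_image int_vec_countable)
    fix S assume "S \<in> ?F"
    then show "negligible S" using negligible_translation[OF neg] by blast
  qed
  ultimately show ?thesis using negligible_subset by blast
qed

lemma cis_eq_imp: "cis a = cis b \<Longrightarrow> \<exists>n::int. a = b + 2 * pi * of_int n"
proof -
  assume "cis a = cis b"
  then have "exp (\<i> * complex_of_real a) = exp (\<i> * complex_of_real b)" by (simp add: cis_conv_exp)
  then obtain n :: int where "\<i> * complex_of_real a = \<i> * complex_of_real b + complex_of_real (real_of_int (2 * n) * pi) * \<i>"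
    unfolding exp_eq by blast
  then have "Im (\<i> * complex_of_real a) = Im (\<i> * complex_of_real b + complex_of_real (real_of_int (2 * n) * pi) * \<i>)"
    by simp
  then have "a = b + 2 * pi * of_int n" by simp
  then show ?thesis by blast
qed

lemma E_eq:
  fixes x y :: "real^'n"
  shows "E x = E y \<Longrightarrow> \<exists>k. int_vec k \<and> x = y + (2*pi) *\<^sub>R k"
proof -
  assume "E x = E y"
  then have "\<forall>i. cis (x $ i) = cis (y $ i)" by (simp add: E_def vec_eq_iff)
  then have "\<forall>i. \<exists>n::int. x $ i = y $ i + 2 * pi * of_int n" using cis_eq_imp by blast
  then obtain N where N: "\<And>i. x $ i = y $ i + 2 * pi * of_int (N i)" by metis
  define k :: "real^'n" where "k = (\<chi> i. of_int (N i))"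
  have "int_vec k" by (simp add: k_def int_vec_def)
  moreover have "x = y + (2*pi) *\<^sub>R k" by (simp add: vec_eq_iff k_def N)
  ultimately show ?thesis by blast
qed

lemma torus_ball_periodic:
  assumes k: "int_vec k" and x: "x \<in> torus_ball c r"
  shows "x + (2*pi) *\<^sub>R k \<in> torus_ball c r"
proof -
  obtain l where l: "int_vec l" "dist x (c + (2*pi) *\<^sub>R l) < r" using x by (auto simp: torus_ball_def)
  have "dist (x + (2*pi) *\<^sub>R k) (c + (2*pi) *\<^sub>R (l + k)) = dist x (c + (2*pi) *\<^sub>R l)"
    by (simp add: dist_norm algebra_simps)
  then show ?thesis using l int_vec_add[OF l(1) k] unfolding torus_ball_def by (metis (mono_tags, lifting) mem_Collect_eq)
qed

lemma support_point:
  fixes C :: "(real^'n) set"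
  assumes C: "compact C" "\<not> negligible C"
  shows "\<exists>c0\<in>C. \<forall>\<epsilon>>0. \<not> negligible (C \<inter> ball c0 \<epsilon>)"
proof (rule ccontr)
  assume "\<not> ?thesis"
  then have "\<forall>c\<in>C. \<exists>\<epsilon>>0. negligible (C \<inter> ball c \<epsilon>)" by blast
  then obtain ep where ep: "\<And>c. c \<in> C \<Longrightarrow> ep c > 0 \<and> negligible (C \<inter> ball c (ep c))" by metis
  have cov: "C \<subseteq> \<Union> ((\<lambda>c. ball c (ep c)) ` C)"
    using ep by force
  obtain D where D: "D \<subseteq> C" "finite D" "C \<subseteq> \<Union> ((\<lambda>c. ball c (ep c)) ` D)"
    by (rule compactE_image[OF C(1) _ cov]) auto
  have "C = \<Union> ((\<lambda>c. C \<inter> ball c (ep c)) ` D)" using D(3) D(1) by blast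
  moreover have "negligible (\<Union> ((\<lambda>c. C \<inter> ball c (ep c)) ` D))"
    using D(1,2) ep by (intro negligible_Union) auto
  ultimately show False using C(2) by simp
qed

lemma inner_compact:
  fixes Z :: "(real^'n) set"
  assumes Z: "Z \<in> sets lebesgue" "\<not> negligible Z"
  shows "\<exists>C. compact C \<and> C \<subseteq> Z \<and> \<not> negligible C"
proof -
  have "Z = (\<Union>m. Z \<inter> cball 0 (real m))"
  proof -
    have "x \<in> cball 0 (real (nat \<lceil>norm x\<rceil>))" for x :: "real^'n"
      by (simp add: real_nat_ceiling_ge)
    then show ?thesis by blast
  qed
  then have "\<exists>m. \<not> negligible (Z \<inter> cball 0 (real m))"
  proof -
    assume eqZ: "Z = (\<Union>m. Z \<inter> cball 0 (real m))"
    show ?thesis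
    proof (rule ccontr)
      assume "\<not> (\<exists>m. \<not> negligible (Z \<inter> cball 0 (real m)))"
      then have "negligible (\<Union>m. Z \<inter> cball 0 (real m))"
        by (intro negligible_countable_Union) auto
      then show False using Z(2) eqZ by simp
    qed
  qed
  then obtain m where m: "\<not> negligible (Z \<inter> cball 0 (real m))" by blast
  define S where "S = Z \<inter> cball 0 (real m)"
  have Sl: "S \<in> lmeasurable"
    unfolding S_def by (intro bounded_set_imp_lmeasurable) (auto intro: bounded_subset[OF bounded_cball] sets.Int Z(1))
  have mS: "measure lebesgue S > 0"
    using m Sl unfolding S_def[symmetric] negligible_iff_measure
    by (metis measure_nonneg order_le_less)
  obtain T where T: "closed T" "T \<subseteq> S" "S - T \<in> lmeasurable" "emeasure lebesgue (S - T) < ennreal (measure lebesgue S / 2)"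
    using sets_lebesgue_inner_closed[of S "measure lebesgue S / 2"] Sl mS by (auto simp: fmeasurable_def)
  have "\<not> negligible T"
  proof
    assume nT: "negligible T"
    have "measure lebesgue (S - T) = measure lebesgue S"
      by (rule measure_Diff_null_set) (use Sl nT in \<open>auto simp: negligible_iff_null_sets\<close>)
    moreover have "measure lebesgue (S - T) < measure lebesgue S / 2"
      using T(3,4) mS by (simp add: emeasure_eq_measure2 ennreal_less_iff)
    ultimately show False using mS by simp
  qed
  moreover have "compact T"
    using T(1,2) unfolding S_def by (meson bounded_cball bounded_subset compact_eq_bounded_closed inf_le2 order_trans)
  moreover have "T \<subseteq> Z" using T(2) unfolding S_def by blast
  ultimately show ?thesis by blast
qed

lemma L2_L1:
  fixes f :: "real^'n \<Rightarrow> real"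
  assumes "L2_torus f"
  shows "f \<in> borel_measurable lebesgue" "integrable lebesgue (\<lambda>x. indicator torus_cube x * f x)"
proof -
  show fm: "f \<in> borel_measurable lebesgue" using assms by (simp add: L2_torus_def)
  have sq: "integrable lebesgue (\<lambda>x. indicator torus_cube x * (f x)\<^sup>2)"
    using assms by (simp add: L2_torus_def set_integrable_def)
  have one: "integrable lebesgue (\<lambda>x. indicator torus_cube x :: real)"
  proof (rule integrable_real_indicator)
    show "torus_cube \<in> sets lebesgue" by simp
    have "torus_cube \<in> lmeasurable" unfolding torus_cube_def by simp
    then show "emeasure lebesgue torus_cube < \<infinity>" by (simp add: fmeasurable_def)
  qed
  show "integrable lebesgue (\<lambda>x. indicator torus_cube x * f x)"
  proof (rule Bochner_Integration.integrable_bound[OF Bochner_Integration.integrable_add[OF one sq]])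
    show "(\<lambda>x. indicator torus_cube x * f x) \<in> borel_measurable lebesgue" using fm by measurable
    show "AE x in lebesgue. norm (indicator torus_cube x * f x) \<le> norm (indicator torus_cube x + indicator torus_cube x * (f x)\<^sup>2)"
    proof (intro AE_I2)
      fix x
      have "0 \<le> (\<bar>f x\<bar> - 1)\<^sup>2" by simp
      then have "2 * \<bar>f x\<bar> \<le> 1 + \<bar>f x\<bar> * \<bar>f x\<bar>" by (simp add: power2_eq_square algebra_simps)
      then have "2 * \<bar>f x\<bar> \<le> 1 + (f x)\<^sup>2" by (simp add: power2_eq_square)
      moreover have "0 \<le> (f x)\<^sup>2" by simp
      ultimately have "\<bar>f x\<bar> \<le> 1 + (f x)\<^sup>2" by linarith
      then show "norm (indicator torus_cube x * f x) \<le> norm (indicator torus_cube x + indicator torus_cube x * (f x)\<^sup>2)"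
        by (auto simp: indicator_def abs_mult)
    qed
  qed
qed


lemma kern_all:
  assumes dim: "CARD('n) \<in> {1, 2}" and t: "t > 0"
  shows "integrable lborel (kern t :: real^'n \<Rightarrow> real)"
    and "\<And>\<xi>::real^'n. (\<integral>y. kern t y *\<^sub>R cis (\<xi> \<bullet> y) \<partial>lborel) = complex_of_real (sin_quot \<xi> t)"
proof -
  have "integrable lborel (kern t :: real^'n \<Rightarrow> real) \<and> (\<forall>\<xi>::real^'n. (\<integral>y. kern t y *\<^sub>R cis (\<xi> \<bullet> y) \<partial>lborel) = complex_of_real (sin_quot \<xi> t))"
  proof (cases "CARD('n) = 1")
    case True
    then obtain i :: 'n where "UNIV = {i}" using card_1_singleton_iff[of "UNIV :: 'n set"] by auto
    then show ?thesis using kern_FT1[OF _ t] by blast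
  next
    case False
    then have "CARD('n) = 2" using dim by simp
    then obtain i j :: 'n where "UNIV = {i, j}" "i \<noteq> j" using card_2_iff[of "UNIV :: 'n set"] by auto
    then show ?thesis using kern_FT2[OF _ _ t] by blast
  qed
  then show "integrable lborel (kern t :: real^'n \<Rightarrow> real)"
    "\<And>\<xi>::real^'n. (\<integral>y. kern t y *\<^sub>R cis (\<xi> \<bullet> y) \<partial>lborel) = complex_of_real (sin_quot \<xi> t)"
    by auto
qed

lemma kern_nonneg: "0 \<le> kern t y"
proof -
  have "norm y < t \<Longrightarrow> (norm y)\<^sup>2 < t\<^sup>2" by (simp add: power_strict_mono)
  then show ?thesis by (auto simp: kern_def)
qed

lemma kern_pos: "norm y < t \<Longrightarrow> 0 < kern t y"
proof -
  assume "norm y < t"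
  then have "(norm y)\<^sup>2 < t\<^sup>2" by (simp add: power_strict_mono)
  then show ?thesis using \<open>norm y < t\<close> by (auto simp: kern_def)
qed

lemma torus_ball_UNIV:
  assumes r: "r > 2 * pi * CARD('n)"
  shows "torus_ball c r = (UNIV :: (real^'n) set)"
proof -
  have "x \<in> torus_ball c r" for x :: "real^'n"
  proof -
    define v where "v = x - c"
    have eq: "x - (c + (2*pi) *\<^sub>R redk v) = red v"
      using red_eq[of v] by (simp add: v_def algebra_simps)
    have comp: "0 \<le> red v $ i \<and> red v $ i \<le> 2 * pi" for i
      using red_in_cube[of v] unfolding torus_cube_def mem_box_cart by simp
    have "dist x (c + (2*pi) *\<^sub>R redk v) = norm (red v)" by (simp add: dist_norm eq)
    also have "\<dots> \<le> (\<Sum>i\<in>UNIV. \<bar>red v $ i\<bar>)" by (rule norm_le_l1_cart)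
    also have "\<dots> \<le> (\<Sum>i\<in>(UNIV::'n set). 2 * pi)" using comp by (intro sum_mono) auto
    also have "\<dots> = 2 * pi * CARD('n)" by simp
    finally have "dist x (c + (2*pi) *\<^sub>R redk v) < r" using r by linarith
    then show ?thesis using redk_int[of v] unfolding torus_ball_def by blast
  qed
  then show ?thesis by blast
qed

lemma vanish_facts:
  fixes w1 :: "real^'n \<Rightarrow> real"
  assumes nonzero: "\<not> (AE x in lebesgue. w1 x = 0)" and t: "t > vanish_radius w1"
  shows "t > 0" "\<And>c. \<not> (AE x in lebesgue. x \<in> torus_ball c t \<longrightarrow> w1 x = 0)"
proof -
  define S where "S = {r. r \<ge> 0 \<and> (\<exists>c. AE x in lebesgue. x \<in> torus_ball c r \<longrightarrow> w1 x = (0::real))}"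
  have VR: "vanish_radius w1 = Sup S" unfolding vanish_radius_def S_def by simp
  have "0 \<in> S" unfolding S_def torus_ball_def by simp
  have bdd: "bdd_above S"
  proof (rule bdd_aboveI)
    fix r assume "r \<in> S"
    then obtain c where c: "AE x in lebesgue. x \<in> torus_ball c r \<longrightarrow> w1 x = 0" unfolding S_def by blast
    show "r \<le> 2 * pi * CARD('n)"
    proof (rule ccontr)
      assume "\<not> r \<le> 2 * pi * CARD('n)"
      then have "torus_ball c r = UNIV" by (intro torus_ball_UNIV) simp
      then have "AE x in lebesgue. w1 x = 0" using c by simp
      then show False using nonzero by simp
    qed
  qed
  have "0 \<le> vanish_radius w1" unfolding VR by (rule cSup_upper[OF \<open>0 \<in> S\<close> bdd])
  then show t0: "t > 0" using t by simp
  have "t \<notin> S"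
  proof
    assume "t \<in> S"
    then have "t \<le> Sup S" by (rule cSup_upper[OF _ bdd])
    then show False using t VR by simp
  qed
  then show "\<And>c. \<not> (AE x in lebesgue. x \<in> torus_ball c t \<longrightarrow> w1 x = 0)"
    using t0 unfolding S_def by auto
qed


lemma I_pos:
  fixes Ct C :: "(real^'n) set"
  assumes Ki: "integrable lborel (kern t :: real^'n \<Rightarrow> real)"
    and Ctb[measurable]: "Ct \<in> sets borel" and CC: "C \<subseteq> Ct"
    and supp: "\<And>\<epsilon>. \<epsilon> > 0 \<Longrightarrow> \<not> negligible (C \<inter> ball c0 \<epsilon>)"
    and per: "\<And>x k. int_vec k \<Longrightarrow> x \<in> Ct \<Longrightarrow> x + (2*pi) *\<^sub>R k \<in> Ct"
    and x: "x \<in> torus_ball c0 t"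
  shows "conv (kern t) (indicator Ct) x > (0::real)"
proof -
  obtain k where k: "int_vec k" "dist x (c0 + (2*pi) *\<^sub>R k) < t" using x by (auto simp: torus_ball_def)
  define x' where "x' = x - (2*pi) *\<^sub>R k"
  have dx': "dist x' c0 < t" using k(2) by (simp add: x'_def dist_norm algebra_simps)
  have ind_eq: "indicator Ct (x + y) = (indicator Ct (x' + y) :: real)" for y
  proof -
    have e1: "x + y = (x' + y) + (2*pi) *\<^sub>R k" by (simp add: x'_def)
    have e2: "x' + y = (x + y) + (2*pi) *\<^sub>R (- k)" by (simp add: x'_def)
    have "x + y \<in> Ct \<longleftrightarrow> x' + y \<in> Ct"
      using per[OF k(1), of "x' + y"] per[OF int_vec_uminus[OF k(1)], of "x + y"] unfolding e1[symmetric] e2[symmetric] by blast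
    then show ?thesis by (simp add: indicator_def)
  qed
  have conv_eq: "conv (kern t) (indicator Ct :: real^'n \<Rightarrow> real) x = conv (kern t) (indicator Ct :: real^'n \<Rightarrow> real) x'"
    unfolding conv_def by (intro Bochner_Integration.integral_cong refl) (metis ind_eq)
  define \<epsilon> where "\<epsilon> = t - dist x' c0"
  have \<epsilon>: "\<epsilon> > 0" using dx' by (simp add: \<epsilon>_def)
  define B where "B = C \<inter> ball c0 \<epsilon>"
  have nB: "\<not> negligible B" unfolding B_def by (rule supp[OF \<epsilon>])
  define Y where "Y = (+) (- x') ` B"
  have nY: "\<not> negligible Y" unfolding Y_def using nB negligible_translation_rev by blast
  define F where "F y = kern t y * indicator Ct (x' + y)" for y :: "real^'n"
  have Fpos: "F y > 0" if "y \<in> Y" for y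
  proof -
    obtain z where z: "z \<in> B" "y = - x' + z" using \<open>y \<in> Y\<close> unfolding Y_def by blast
    have "z - x' = y" using z(2) by simp
    then have "norm y = dist z x'" by (simp add: dist_norm)
    also have "\<dots> \<le> dist z c0 + dist c0 x'" by (rule dist_triangle)
    also have "\<dots> < \<epsilon> + dist x' c0" using z(1) by (simp add: B_def dist_commute)
    also have "\<dots> = t" by (simp add: \<epsilon>_def)
    finally have "kern t y > 0" by (rule kern_pos)
    moreover have "x' + y \<in> Ct" using z CC unfolding B_def by (simp add: subset_iff)
    ultimately show ?thesis by (simp add: F_def)
  qed
  have Fm[measurable]: "F \<in> borel_measurable borel" unfolding F_def by measurable
  have Fi: "integrable lborel F"
    unfolding F_def using integrable_bdd_mult[OF Ki, of "\<lambda>y. indicator Ct (x' + y) :: real" 1] by (simp add: indicator_def)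
  have F0: "\<And>y. 0 \<le> F y" by (simp add: F_def kern_nonneg)
  have cv: "conv (kern t) (indicator Ct :: real^'n \<Rightarrow> real) x' = (\<integral>y. F y \<partial>lborel)"
    unfolding conv_def F_def by simp
  have "(\<integral>y. F y \<partial>lborel) \<noteq> 0"
  proof
    assume "(\<integral>y. F y \<partial>lborel) = 0"
    then have "AE y in lborel. F y = 0" using integral_nonneg_eq_0_iff_AE[OF Fi] F0 by simp
    then obtain N where N: "N \<in> null_sets lborel" "{y \<in> space lborel. \<not> F y = 0} \<subseteq> N"
      by (auto simp: eventually_ae_filter)
    have "Y \<subseteq> N"
    proof
      fix y assume "y \<in> Y" then have "F y \<noteq> 0" using Fpos[of y] by simp
      then show "y \<in> N" using N(2) by auto
    qed
    moreover have "negligible N" using null_sets_completionI[OF N(1)] by (simp add: negligible_iff_null_sets)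
    ultimately show False using nY negligible_subset by blast
  qed
  moreover have "(\<integral>y. F y \<partial>lborel) \<ge> 0" using F0 by (simp add: integral_nonneg)
  ultimately show ?thesis using conv_eq cv by simp
qed

lemma w1I_pos:
  fixes w1 I :: "real^'n \<Rightarrow> real"
  assumes w1m: "w1 \<in> borel_measurable lebesgue" and w1i: "integrable lebesgue (\<lambda>x. indicator torus_cube x * w1 x)"
    and w1per: "periodic_2pi w1" and nonneg: "AE x in lebesgue. w1 x \<ge> 0"
    and vr: "\<not> (AE x in lebesgue. x \<in> torus_ball c0 t \<longrightarrow> w1 x = 0)"
    and Im: "I \<in> borel_measurable borel" and Ib: "\<And>x. \<bar>I x\<bar> \<le> B" and I0: "\<And>x. I x \<ge> 0"
    and Ipos: "\<And>x. x \<in> torus_ball c0 t \<Longrightarrow> I x > 0"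
  shows "(\<integral>x. (indicator torus_cube x * w1 x) * I x \<partial>lebesgue) > 0"
proof -
  define F where "F x = (indicator torus_cube x * w1 x) * I x" for x
  have Fi: "integrable lebesgue F" unfolding F_def by (rule L_int[OF w1i Im Ib])
  have F0: "AE x in lebesgue. 0 \<le> F x"
    using nonneg by eventually_elim (simp add: F_def I0 indicator_def)
  have "(\<integral>x. F x \<partial>lebesgue) \<noteq> 0"
  proof
    assume "(\<integral>x. F x \<partial>lebesgue) = 0"
    then have "AE x in lebesgue. F x = 0" using integral_nonneg_eq_0_iff_AE[OF Fi F0] by simp
    then obtain N where N: "negligible N" "{x. \<not> F x = 0} \<subseteq> N"
      unfolding eventually_ae_filter_negligible by blast
    define P where "P = {x \<in> torus_ball c0 t. w1 x > 0}"
    have "P \<inter> torus_cube \<subseteq> N"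
    proof
      fix x assume "x \<in> P \<inter> torus_cube"
      then have "F x > 0" using Ipos[of x] by (simp add: P_def F_def)
      then show "x \<in> N" using N(2) by auto
    qed
    then have "negligible (P \<inter> torus_cube)" using N(1) negligible_subset by blast
    then have nP: "negligible P"
    proof (rule periodic_transfer[rotated])
      fix x k :: "real^'n" assume k: "int_vec k" and x: "x \<in> P"
      have "w1 (x + (2*pi) *\<^sub>R k) = w1 x" using w1per k by (simp add: periodic_2pi_def)
      moreover have "x + (2*pi) *\<^sub>R k \<in> torus_ball c0 t" using x torus_ball_periodic[OF k] by (simp add: P_def)
      ultimately show "x + (2*pi) *\<^sub>R k \<in> P" using x by (simp add: P_def)
    qed
    obtain N2 where N2: "negligible N2" "{x. \<not> w1 x \<ge> 0} \<subseteq> N2"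
      using nonneg unfolding eventually_ae_filter_negligible by blast
    have "{x. \<not> (x \<in> torus_ball c0 t \<longrightarrow> w1 x = 0)} \<subseteq> P \<union> N2"
    proof
      fix x assume x: "x \<in> {x. \<not> (x \<in> torus_ball c0 t \<longrightarrow> w1 x = 0)}"
      show "x \<in> P \<union> N2"
      proof (cases "x \<in> N2")
        case False
        then have "w1 x \<ge> 0" using N2(2) by blast
        then show ?thesis using x by (auto simp: P_def)
      qed simp
    qed
    moreover have "negligible (P \<union> N2)" using nP N2(1) by simp
    ultimately have "AE x in lebesgue. x \<in> torus_ball c0 t \<longrightarrow> w1 x = 0"
      unfolding eventually_ae_filter_negligible by blast
    then show False using vr by simp
  qed
  moreover have "(\<integral>x. F x \<partial>lebesgue) \<ge> 0" by (rule integral_nonneg_AE[OF F0])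
  ultimately show ?thesis unfolding F_def by simp
qed


theorem mainTheorem17:
  fixes w1 :: "real^'n \<Rightarrow> real" and w :: "real \<Rightarrow> real^'n \<Rightarrow> real"
  assumes dim: "CARD('n) \<in> {1, 2}"
    and L2: "L2_torus w1"
    and nonzero: "\<not> (AE x in lebesgue. w1 x = 0)"
    and nonneg: "AE x in lebesgue. w1 x \<ge> 0"
    and sol: "\<And>s. wave_position (\<lambda>_. 0) w1 s (w s)"
    and t: "t > vanish_radius w1"
  shows "AE x in lebesgue. w t x > 0"
proof -
  have t0: "t > 0" and vr: "\<And>c. \<not> (AE x in lebesgue. x \<in> torus_ball c t \<longrightarrow> w1 x = 0)"
    using vanish_facts[OF nonzero t] by auto
  have wp: "wave_position (\<lambda>_. 0) w1 t (w t)" by (rule sol)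
  have z: "fourier_coeff (\<lambda>_. 0 :: real) n = 0" for n :: "real^'n" by (simp add: fourier_coeff_def)
  have L2t: "L2_torus (w t)" using wp by (simp add: wave_position_def)
  have fc: "\<And>k. int_vec k \<Longrightarrow> fourier_coeff (w t) k = fourier_coeff w1 k * complex_of_real (sin_quot k t)"
    using wp by (simp add: wave_position_def z)
  have w1m: "w1 \<in> borel_measurable lebesgue" and w1i: "integrable lebesgue (\<lambda>x. indicator torus_cube x * w1 x)"
    using L2_L1[OF L2] by auto
  have wtm: "w t \<in> borel_measurable lebesgue" and wti: "integrable lebesgue (\<lambda>x. indicator torus_cube x * w t x)"
    using L2_L1[OF L2t] by auto
  have w1per: "periodic_2pi w1" using L2 by (simp add: L2_torus_def)
  have wtper: "periodic_2pi (w t)" using L2t by (simp add: L2_torus_def)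
  have Ki: "integrable lborel (kern t :: real^'n \<Rightarrow> real)" by (rule kern_all(1)[OF dim t0])
  have KF: "\<And>\<xi>::real^'n. (\<integral>y. kern t y *\<^sub>R cis (\<xi> \<bullet> y) \<partial>lborel) = complex_of_real (sin_quot \<xi> t)"
    by (rule kern_all(2)[OF dim t0])
  have Km[measurable]: "(kern t :: real^'n \<Rightarrow> real) \<in> borel_measurable borel" by (rule kern_measurable)
  have sqm: "\<And>k::real^'n. sin_quot (-k) t = sin_quot k t" by (simp add: sin_quot_def)
  have ID: "(\<integral>x. (indicator torus_cube x * w t x) * h (E x) \<partial>lebesgue)
       = (\<integral>x. (indicator torus_cube x * w1 x) * conv (kern t) (\<lambda>x. h (E x)) x \<partial>lebesgue)"
    if h: "continuous_on (range E) h" for h :: "complex^'n \<Rightarrow> real"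
    by (rule real_identity[where sq = "\<lambda>k. sin_quot k t", OF wtm wti w1m w1i fc sqm Ki Km KF h])
  show ?thesis
  proof (rule ccontr)
    assume neg: "\<not> (AE x in lebesgue. w t x > 0)"
    define Z where "Z = {x. w t x \<le> 0}"
    have nZ: "\<not> negligible Z"
    proof
      assume "negligible Z"
      moreover have "{x. \<not> w t x > 0} \<subseteq> Z" by (auto simp: Z_def)
      ultimately have "AE x in lebesgue. w t x > 0" unfolding eventually_ae_filter_negligible by blast
      then show False using neg by simp
    qed
    have Zs: "Z \<in> sets lebesgue"
    proof -
      have "{x \<in> space lebesgue. w t x \<le> 0} \<in> sets lebesgue" using wtm by measurable
      then show ?thesis by (simp add: Z_def)
    qed
    obtain C where C: "compact C" "C \<subseteq> Z" "\<not> negligible C" using inner_compact[OF Zs nZ] by blast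
    obtain c0 where c0: "c0 \<in> C" "\<And>\<epsilon>. \<epsilon> > 0 \<Longrightarrow> \<not> negligible (C \<inter> ball c0 \<epsilon>)"
      using support_point[OF C(1) C(3)] by blast
    define EC where "EC = E ` C"
    have ECc: "compact EC" unfolding EC_def
      by (rule compact_continuous_image[OF continuous_on_subset[OF E_cont] C(1)]) simp
    then have ECcl: "closed EC" by (rule compact_imp_closed)
    have ECne: "EC \<noteq> {}" using c0(1) by (auto simp: EC_def)
    define Ct where "Ct = E -` EC"
    have isc: "isCont E x" for x :: "real^'n" using E_cont[where 'a='n] continuous_on_eq_continuous_at[OF open_UNIV] by blast
    have Ctcl: "closed Ct" unfolding Ct_def by (rule continuous_closed_vimage[OF ECcl isc])
    then have Ctb[measurable]: "Ct \<in> sets borel" by simp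
    have CCt: "C \<subseteq> Ct" by (auto simp: Ct_def EC_def)
    have CtZ: "Ct \<subseteq> Z"
    proof
      fix x assume "x \<in> Ct"
      then obtain c where c: "c \<in> C" "E x = E c" by (auto simp: Ct_def EC_def)
      obtain k where k: "int_vec k" "x = c + (2*pi) *\<^sub>R k" using E_eq[OF c(2)] by blast
      have "w t x = w t c" using wtper k by (simp add: periodic_2pi_def)
      then show "x \<in> Z" using c(1) C(2) by (auto simp: Z_def)
    qed
    have per: "x + (2*pi) *\<^sub>R k \<in> Ct" if "int_vec k" "x \<in> Ct" for x k :: "real^'n"
      using that E_periodic[of k x] by (simp add: Ct_def)
    define hm where "hm m z = max 0 (1 - real m * infdist z EC)" for m :: nat and z :: "complex^'n"
    have hm_cont: "continuous_on UNIV (hm m)" for m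
      unfolding hm_def
      by (intro continuous_on_max continuous_on_const continuous_on_diff continuous_on_mult continuous_on_infdist continuous_on_id)
    have hm0: "0 \<le> hm m z" for m z by (simp add: hm_def)
    have hm1: "hm m z \<le> 1" for m z by (simp add: hm_def infdist_nonneg)
    have hm_ge: "indicator Ct x \<le> hm m (E x)" for m x
    proof (cases "x \<in> Ct")
      case True
      then have "infdist (E x) EC = 0" by (simp add: Ct_def infdist_zero)
      then show ?thesis using True by (simp add: hm_def)
    qed (simp add: hm0)
    have hm_lim: "(\<lambda>m. hm m (E x)) \<longlonglongrightarrow> indicator Ct x" for x
    proof (cases "x \<in> Ct")
      case True
      then have "infdist (E x) EC = 0" by (simp add: Ct_def infdist_zero)
      then show ?thesis using True by (simp add: hm_def)
    next
      case False
      then have d: "infdist (E x) EC > 0" using infdist_pos_not_in_closed[OF ECcl ECne] by (simp add: Ct_def)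
      have "eventually (\<lambda>m. hm m (E x) = 0) sequentially"
      proof (rule eventually_sequentiallyI[of "nat \<lceil>1 / infdist (E x) EC\<rceil>"])
        fix m assume "nat \<lceil>1 / infdist (E x) EC\<rceil> \<le> m"
        then have "1 / infdist (E x) EC \<le> real m" by linarith
        then have "1 \<le> real m * infdist (E x) EC" using d by (simp add: field_simps)
        then show "hm m (E x) = 0" by (simp add: hm_def)
      qed
      then have "(\<lambda>m. hm m (E x)) \<longlonglongrightarrow> 0" by (rule tendsto_eventually)
      then show ?thesis using False by simp
    qed
    define IK where "IK = (\<integral>y. \<bar>kern t (y::real^'n)\<bar> \<partial>lborel)"
    define I where "I = conv (kern t) (indicator Ct :: real^'n \<Rightarrow> real)"
    have indm[measurable]: "(indicator Ct :: real^'n \<Rightarrow> real) \<in> borel_measurable borel" by simp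
    have Im[measurable]: "I \<in> borel_measurable borel" unfolding I_def by (rule conv_borel_real[OF Km indm])
    have Ib: "\<bar>I x\<bar> \<le> 1 * IK" for x
      unfolding I_def IK_def using conv_bound_real[OF Ki Km indm, of 1 x] by (simp add: indicator_def)
    have I0: "I x \<ge> 0" for x
      unfolding I_def conv_def by (simp add: integral_nonneg kern_nonneg)
    have Ipos: "I x > 0" if "x \<in> torus_ball c0 t" for x
      unfolding I_def by (rule I_pos[OF Ki Ctb CCt c0(2) per that])
    have c1: "0 < (\<integral>x. (indicator torus_cube x * w1 x) * I x \<partial>lebesgue)"
      by (rule w1I_pos[OF w1m w1i w1per nonneg vr Im Ib I0 Ipos])
    have hmEm[measurable]: "(\<lambda>x. hm m (E x)) \<in> borel_measurable borel" for m
      by (rule borel_measurable_continuous_onI[OF continuous_on_compose2[OF hm_cont E_cont]]) auto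
    have hmEb: "\<bar>hm m (E x)\<bar> \<le> 1" for m x using hm0 hm1 by simp
    have low: "(\<integral>x. (indicator torus_cube x * w1 x) * I x \<partial>lebesgue)
        \<le> (\<integral>x. (indicator torus_cube x * w1 x) * conv (kern t) (\<lambda>x. hm m (E x)) x \<partial>lebesgue)" for m
    proof (rule integral_mono_AE)
      show "integrable lebesgue (\<lambda>x. (indicator torus_cube x * w1 x) * I x)" by (rule L_int[OF w1i Im Ib])
      show "integrable lebesgue (\<lambda>x. (indicator torus_cube x * w1 x) * conv (kern t) (\<lambda>x. hm m (E x)) x)"
        by (rule L_int[OF w1i conv_borel_real[OF Km hmEm] conv_bound_real[OF Ki Km hmEm hmEb]])
      have cle: "I x \<le> conv (kern t) (\<lambda>x. hm m (E x)) x" for x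
        unfolding I_def conv_def
      proof (simp, rule integral_mono)
        show "integrable lborel (\<lambda>y. kern t y * indicator Ct (x + y))"
          using integrable_bdd_mult[OF Ki, of "\<lambda>y. indicator Ct (x + y) :: real" 1] by (simp add: indicator_def)
        show "integrable lborel (\<lambda>y. kern t y * hm m (E (x + y)))"
          using integrable_bdd_mult[OF Ki, of "\<lambda>y. hm m (E (x + y))" 1] hmEb by simp
        fix y show "kern t y * indicator Ct (x + y) \<le> kern t y * hm m (E (x + y))"
          by (rule mult_left_mono[OF hm_ge kern_nonneg])
      qed
      show "AE x in lebesgue. (indicator torus_cube x * w1 x) * I x \<le> (indicator torus_cube x * w1 x) * conv (kern t) (\<lambda>x. hm m (E x)) x"
        using nonneg
      proof eventually_elim
        case (elim x)
        then have "0 \<le> indicator torus_cube x * w1 x" by (simp add: indicator_def)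
        then show ?case by (rule mult_left_mono[OF cle])
      qed
    qed
    have eqm: "(\<integral>x. (indicator torus_cube x * w t x) * hm m (E x) \<partial>lebesgue)
        = (\<integral>x. (indicator torus_cube x * w1 x) * conv (kern t) (\<lambda>x. hm m (E x)) x \<partial>lebesgue)" for m
      by (rule ID[OF continuous_on_subset[OF hm_cont]]) simp
    have lim: "(\<lambda>m. \<integral>x. (indicator torus_cube x * w t x) * hm m (E x) \<partial>lebesgue)
        \<longlonglongrightarrow> (\<integral>x. (indicator torus_cube x * w t x) * indicator Ct x \<partial>lebesgue)"
    proof (rule integral_dominated_convergence[where w = "\<lambda>x. \<bar>indicator torus_cube x * w t x\<bar>"])
      show "(\<lambda>x. (indicator torus_cube x * w t x) * indicator Ct x) \<in> borel_measurable lebesgue"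
        using wtm borel_leb[OF indm] by measurable
      show "(\<lambda>x. (indicator torus_cube x * w t x) * hm m (E x)) \<in> borel_measurable lebesgue" for m
        using wtm borel_leb[OF hmEm[of m]] by measurable
      show "integrable lebesgue (\<lambda>x. \<bar>indicator torus_cube x * w t x\<bar>)" by (rule integrable_abs[OF wti])
      show "AE x in lebesgue. (\<lambda>m. (indicator torus_cube x * w t x) * hm m (E x)) \<longlonglongrightarrow> (indicator torus_cube x * w t x) * indicator Ct x"
        by (intro AE_I2 tendsto_mult_left hm_lim)
      show "AE x in lebesgue. norm ((indicator torus_cube x * w t x) * hm m (E x)) \<le> \<bar>indicator torus_cube x * w t x\<bar>" for m
      proof (intro AE_I2)
        fix x
        have "\<bar>indicator torus_cube x * w t x\<bar> * \<bar>hm m (E x)\<bar> \<le> \<bar>indicator torus_cube x * w t x\<bar> * 1"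
          by (intro mult_left_mono hmEb) simp
        then show "norm ((indicator torus_cube x * w t x) * hm m (E x)) \<le> \<bar>indicator torus_cube x * w t x\<bar>"
          by (simp add: abs_mult)
      qed
    qed
    have lim_le: "(\<integral>x. (indicator torus_cube x * w t x) * indicator Ct x \<partial>lebesgue) \<le> 0"
    proof -
      have "0 \<le> (\<integral>x. - ((indicator torus_cube x * w t x) * indicator Ct x) \<partial>lebesgue)"
      proof (rule Bochner_Integration.integral_nonneg)
        fix x
        show "0 \<le> - ((indicator torus_cube x * w t x) * indicator Ct x)"
        proof (cases "x \<in> Ct")
          case True
          then have "w t x \<le> 0" using CtZ by (auto simp: Z_def)
          then show ?thesis by (simp add: indicator_def mult_nonneg_nonpos)
        qed simp
      qed
      then show ?thesis by simp
    qed
    have "(\<integral>x. (indicator torus_cube x * w1 x) * I x \<partial>lebesgue)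
        \<le> (\<integral>x. (indicator torus_cube x * w t x) * indicator Ct x \<partial>lebesgue)"
      by (rule LIMSEQ_le_const[OF lim]) (use low eqm in auto)
    then show False using c1 lim_le by linarith
  qed
qed


end
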